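(* Let $\mathcal Z\subseteq\mathbb R^n$ be a real algebraic variety endowed with $\mathscr L^2$-mollifiers $\{\phi_{z,\epsilon}\}$, $\epsilon\in\mathcal E$, with respect to a reference measure $\lambda$. Let $\mu$ be a finite Borel measure on $\mathcal Z$ whose support $X$ is compact, has nonempty Euclidean interior relative to $\mathcal Z$, and is Zariski dense in $\mathcal Z$, and assume $\mu$ has a continuous, strictly positive density $f$ with respect to $\lambda$ on $X$. Then $$\lim_{\epsilon\to0,\ \epsilon\in\mathcal E}\left(\lim_{d\to\infty}\frac{DMCD^\mu_{d,\epsilon}(x,x)}{\|\phi_{x,\epsilon}\|^2_{\mathscr L^2(\lambda)}}\right)=\begin{cases}1/f(x), & x\in X^\circ,\\ 0, & x\in\mathcal Z\setminus X,\end{cases}$$ where $X^\circ$ is the interior of $X$ relative to $\mathcal Z$.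
   Context: A real algebraic variety is the common real zero set of finitely many real polynomials. $\mathcal Z$ with Borel measure $\lambda$ is endowed with $\mathscr L^2$-mollifiers if there is $\mathcal E\subseteq(0,\infty)$ with $0\in\overline{\mathcal E}$ and functions $\phi_{z,\epsilon}:\mathcal Z\to\mathbb R$ such that: (i) $\phi_{z,\epsilon}\ge0$, $\int_{\mathcal Z}\phi_{z,\epsilon}d\lambda=1$; (ii) for each $\epsilon$ there are $0<c_\epsilon<C_\epsilon$ with $c_\epsilon<\|\phi_{z,\epsilon}\|_{\mathscr L^2(\lambda)}<C_\epsilon$ for all $z$; (iii) $\int\phi_{z,\epsilon}p\,d\lambda\to p(z)$ as $\epsilon\to0$ for continuous $p$; (iv) for every $\delta>0$, $\int_{\mathcal Z\cap\{|y-z|>\delta\}}\phi_{z,\epsilon}^2d\lambda/\|\phi_{z,\epsilon}\|^2_{\mathscr L^2(\lambda)}\to0$ as $\epsilon\to0$. Zariski dense: every polynomial vanishing on $X$ vanishes on $\mathcal Z$. $d\mu=f\,d\lambda$ on $X$. $V_d$ is the space of restrictions to $\mathcal Z$ of real polynomials of degree $\le d$. For $z\in\mathcal Z$, let $\varphi_z\in V_d$ be the unique element with $\int_X\phi_{z,\epsilon}p\,d\lambda=\int_X\varphi_z p\,d\mu$ for all $p\in V_d$; the density-estimator MCD kernel is $DMCD^\mu_{d,\epsilon}(x,y):=\langle\varphi_x,\varphi_y\rangle_{\mathscr L^2(\mu)}$. *)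

theory Defs
  imports "HOL-Analysis.Analysis"
begin

definition poly_deg :: "nat \<Rightarrow> (real^'n \<Rightarrow> real) \<Rightarrow> bool" where
  "poly_deg d p \<longleftrightarrow> (\<exists>c :: ('n \<Rightarrow> nat) \<Rightarrow> real.
     p = (\<lambda>x. \<Sum>\<alpha>\<in>{\<alpha>::'n \<Rightarrow> nat. sum \<alpha> UNIV \<le> d}. c \<alpha> * (\<Prod>i\<in>UNIV. (x $ i) ^ (\<alpha> i))))"

definition polynomial_fun :: "(real^'n \<Rightarrow> real) \<Rightarrow> bool" where
  "polynomial_fun p \<longleftrightarrow> (\<exists>d. poly_deg d p)"

definition real_alg_variety :: "(real^'n) set \<Rightarrow> bool" where
  "real_alg_variety Z \<longleftrightarrow> (\<exists>P. finite P \<and> (\<forall>p\<in>P. polynomial_fun p) \<and> Z = {x. \<forall>p\<in>P. p x = 0})"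

definition zariski_dense :: "(real^'n) set \<Rightarrow> (real^'n) set \<Rightarrow> bool" where
  "zariski_dense X Z \<longleftrightarrow> (\<forall>p. polynomial_fun p \<longrightarrow> (\<forall>x\<in>X. p x = 0) \<longrightarrow> (\<forall>x\<in>Z. p x = 0))"

definition Vd :: "nat \<Rightarrow> (real^'n) set \<Rightarrow> (real^'n \<Rightarrow> real) set" where
  "Vd d Z = {(\<lambda>y. if y \<in> Z then q y else 0) | q. poly_deg d q}"

definition msupp :: "(real^'n) measure \<Rightarrow> (real^'n) set" where
  "msupp M = {x. \<forall>U. open U \<longrightarrow> x \<in> U \<longrightarrow> emeasure M U \<noteq> 0}"

definition L2norm :: "(real^'n) measure \<Rightarrow> (real^'n \<Rightarrow> real) \<Rightarrow> real" where
  "L2norm M g = sqrt (\<integral>y. (g y)^2 \<partial>M)"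

text \<open>L^2-mollifiers on Z w.r.t. lam (lam is concentrated on Z, so integrals over Z
  are integrals w.r.t. lam). phi z eps y stands for phi_{z,eps}(y).\<close>
definition L2_mollifiers ::
  "(real^'n) set \<Rightarrow> (real^'n) measure \<Rightarrow> real set \<Rightarrow> (real^'n \<Rightarrow> real \<Rightarrow> real^'n \<Rightarrow> real) \<Rightarrow> bool" where
  "L2_mollifiers Z lam E \<phi> \<longleftrightarrow>
     E \<subseteq> {0<..} \<and> 0 \<in> closure E \<and>
     (\<forall>z\<in>Z. \<forall>\<epsilon>\<in>E. (\<forall>y\<in>Z. \<phi> z \<epsilon> y \<ge> 0) \<and> \<phi> z \<epsilon> \<in> borel_measurable lam \<and>
        integrable lam (\<phi> z \<epsilon>) \<and> (\<integral>y. \<phi> z \<epsilon> y \<partial>lam) = 1 \<and>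
        integrable lam (\<lambda>y. (\<phi> z \<epsilon> y)^2)) \<and>
     (\<forall>\<epsilon>\<in>E. \<exists>c C. 0 < c \<and> c < C \<and>
        (\<forall>z\<in>Z. c < L2norm lam (\<phi> z \<epsilon>) \<and> L2norm lam (\<phi> z \<epsilon>) < C)) \<and>
     (\<forall>p z. continuous_on Z p \<longrightarrow> z \<in> Z \<longrightarrow>
        (\<forall>\<epsilon>\<in>E. integrable lam (\<lambda>y. \<phi> z \<epsilon> y * p y)) \<longrightarrow>
        ((\<lambda>\<epsilon>. \<integral>y. \<phi> z \<epsilon> y * p y \<partial>lam) \<longlongrightarrow> p z) (at 0 within E)) \<and>
     (\<forall>\<delta>>0. \<forall>z\<in>Z.
        ((\<lambda>\<epsilon>. (LINT y:{y. norm (y - z) > \<delta>}|lam. (\<phi> z \<epsilon> y)^2) / (L2norm lam (\<phi> z \<epsilon>))^2)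
          \<longlongrightarrow> 0) (at 0 within E))"

definition dens_rep ::
  "(real^'n) set \<Rightarrow> (real^'n) set \<Rightarrow> (real^'n) measure \<Rightarrow> (real^'n) measure \<Rightarrow>
   (real^'n \<Rightarrow> real \<Rightarrow> real^'n \<Rightarrow> real) \<Rightarrow> nat \<Rightarrow> real \<Rightarrow> real^'n \<Rightarrow> (real^'n \<Rightarrow> real)" where
  "dens_rep Z X lam mu \<phi> d \<epsilon> z =
     (THE g. g \<in> Vd d Z \<and>
        (\<forall>p\<in>Vd d Z. (LINT y:X|lam. \<phi> z \<epsilon> y * p y) = (LINT y:X|mu. g y * p y)))"

definition DMCD ::
  "(real^'n) set \<Rightarrow> (real^'n) set \<Rightarrow> (real^'n) measure \<Rightarrow> (real^'n) measure \<Rightarrow>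
   (real^'n \<Rightarrow> real \<Rightarrow> real^'n \<Rightarrow> real) \<Rightarrow> nat \<Rightarrow> real \<Rightarrow> real^'n \<Rightarrow> real^'n \<Rightarrow> real" where
  "DMCD Z X lam mu \<phi> d \<epsilon> x y =
     (\<integral>t. dens_rep Z X lam mu \<phi> d \<epsilon> x t * dens_rep Z X lam mu \<phi> d \<epsilon> y t \<partial>mu)"

end

theory Submission
  imports Defs "HOL-Analysis.Analysis"
begin

definition mon :: "('n \<Rightarrow> nat) \<Rightarrow> real^'n \<Rightarrow> real" where
  "mon \<alpha> x = (\<Prod>i\<in>UNIV. (x $ i) ^ (\<alpha> i))"

definition Aset :: "nat \<Rightarrow> ('n::finite \<Rightarrow> nat) set" where
  "Aset d = {\<alpha>. sum \<alpha> UNIV \<le> d}"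

lemma finite_Aset: "finite (Aset d :: ('n::finite \<Rightarrow> nat) set)"
proof -
  have "Aset d \<subseteq> PiE (UNIV::'n set) (\<lambda>_. {0..d})"
  proof
    fix \<alpha> :: "'n \<Rightarrow> nat" assume "\<alpha> \<in> Aset d"
    then have "\<alpha> i \<le> d" for i using member_le_sum[of i UNIV \<alpha>] by (auto simp: Aset_def)
    then show "\<alpha> \<in> PiE UNIV (\<lambda>_. {0..d})" by (auto simp: PiE_iff)
  qed
  moreover have "finite (PiE (UNIV::'n set) (\<lambda>_. {0..d}))"
    by (intro finite_PiE) auto
  ultimately show ?thesis by (rule finite_subset)
qed

lemma poly_deg_iff: "poly_deg d p \<longleftrightarrow> (\<exists>c. p = (\<lambda>x. \<Sum>\<alpha>\<in>Aset d. c \<alpha> * mon \<alpha> x))"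
  by (simp add: poly_deg_def Aset_def mon_def)

lemma poly_deg_add:
  assumes "poly_deg d p" "poly_deg d q" shows "poly_deg d (\<lambda>x. p x + q x)"
proof -
  from assms obtain c c' where "p = (\<lambda>x. \<Sum>\<alpha>\<in>Aset d. c \<alpha> * mon \<alpha> x)" "q = (\<lambda>x. \<Sum>\<alpha>\<in>Aset d. c' \<alpha> * mon \<alpha> x)"
    by (auto simp: poly_deg_iff)
  then show ?thesis unfolding poly_deg_iff
    by (intro exI[of _ "\<lambda>\<alpha>. c \<alpha> + c' \<alpha>"]) (auto simp: sum.distrib distrib_right)
qed

lemma poly_deg_cmult:
  assumes "poly_deg d p" shows "poly_deg d (\<lambda>x. a * p x)"
proof -
  from assms obtain c where "p = (\<lambda>x. \<Sum>\<alpha>\<in>Aset d. c \<alpha> * mon \<alpha> x)"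
    by (auto simp: poly_deg_iff)
  then show ?thesis unfolding poly_deg_iff
    by (intro exI[of _ "\<lambda>\<alpha>. a * c \<alpha>"]) (auto simp: sum_distrib_left mult.assoc)
qed

lemma poly_deg_zero: "poly_deg d (\<lambda>x. 0)"
  unfolding poly_deg_iff by (intro exI[of _ "\<lambda>_. 0"]) auto

lemma poly_deg_sum:
  assumes "finite I" "\<And>i. i \<in> I \<Longrightarrow> poly_deg d (g i)"
  shows "poly_deg d (\<lambda>x. \<Sum>i\<in>I. g i x)"
  using assms by (induction I rule: finite_induct) (auto intro: poly_deg_add poly_deg_zero)

lemma poly_deg_mon:
  assumes "sum \<alpha> UNIV \<le> d" shows "poly_deg d (mon \<alpha>)"
  unfolding poly_deg_iff
proof (intro exI[of _ "\<lambda>\<beta>. if \<beta> = \<alpha> then 1 else 0"] ext)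
  fix x
  have "\<alpha> \<in> Aset d" using assms by (simp add: Aset_def)
  then show "mon \<alpha> x = (\<Sum>\<beta>\<in>Aset d. (if \<beta> = \<alpha> then 1 else 0) * mon \<beta> x)"
  proof -
    have "(\<Sum>\<beta>\<in>Aset d. (if \<beta> = \<alpha> then 1 else 0) * mon \<beta> x) = (\<Sum>\<beta>\<in>Aset d. if \<beta> = \<alpha> then mon \<alpha> x else 0)"
      by (rule sum.cong) auto
    also have "\<dots> = mon \<alpha> x" using sum.delta[OF finite_Aset, of \<alpha> "\<lambda>_. mon \<alpha> x" d] \<open>\<alpha> \<in> Aset d\<close> by simp
    finally show ?thesis by simp
  qed
qed

lemma poly_deg_mono_deg:
  assumes "poly_deg d p" "d \<le> D" shows "poly_deg D p"
proof -
  from assms obtain c where p: "p = (\<lambda>x. \<Sum>\<alpha>\<in>Aset d. c \<alpha> * mon \<alpha> x)"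
    by (auto simp: poly_deg_iff)
  have "poly_deg D (\<lambda>x. \<Sum>\<alpha>\<in>Aset d. c \<alpha> * mon \<alpha> x)"
    by (intro poly_deg_sum poly_deg_cmult poly_deg_mon finite_Aset) (use assms(2) in \<open>auto simp: Aset_def\<close>)
  then show ?thesis using p by simp
qed

lemma mon_add: "mon (\<lambda>i. \<alpha> i + \<beta> i) x = mon \<alpha> x * mon \<beta> x"
  by (simp add: mon_def power_add prod.distrib)

lemma poly_deg_mult:
  assumes "poly_deg d p" "poly_deg e q" shows "poly_deg (d + e) (\<lambda>x. p x * q x)"
proof -
  from assms obtain c c' where p: "p = (\<lambda>x. \<Sum>\<alpha>\<in>Aset d. c \<alpha> * mon \<alpha> x)" and q: "q = (\<lambda>x. \<Sum>\<beta>\<in>Aset e. c' \<beta> * mon \<beta> x)"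
    by (auto simp: poly_deg_iff)
  have eq: "p x * q x = (\<Sum>\<alpha>\<in>Aset d. \<Sum>\<beta>\<in>Aset e. (c \<alpha> * c' \<beta>) * mon (\<lambda>i. \<alpha> i + \<beta> i) x)" for x
    unfolding p q sum_product mon_add by (simp add: algebra_simps)
  have "poly_deg (d + e) (\<lambda>x. \<Sum>\<alpha>\<in>Aset d. \<Sum>\<beta>\<in>Aset e. (c \<alpha> * c' \<beta>) * mon (\<lambda>i. \<alpha> i + \<beta> i) x)"
    by (intro poly_deg_sum poly_deg_cmult poly_deg_mon finite_Aset)
       (auto simp: Aset_def sum.distrib intro: add_mono)
  then show ?thesis unfolding eq .
qed

lemma poly_deg_const: "poly_deg d (\<lambda>x. a)"
proof -
  have "poly_deg d (\<lambda>x. a * mon (\<lambda>_. 0) x)" by (intro poly_deg_cmult poly_deg_mon) auto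
  then show ?thesis by (simp add: mon_def)
qed

lemma poly_deg_coord: fixes i :: "'n::finite" shows "poly_deg 1 (\<lambda>x::real^'n. x $ i)"
proof -
  have "poly_deg 1 (mon (\<lambda>j. if j = i then 1 else 0))"
    by (intro poly_deg_mon) (simp add: sum.delta)
  moreover have "mon (\<lambda>j. if j = i then 1 else 0) = (\<lambda>x. x $ i)"
  proof (rule ext)
    fix x :: "real^'n"
    have "(\<Prod>j\<in>UNIV. (x $ j) ^ (if j = i then 1 else 0)) = (\<Prod>j\<in>UNIV. if j = i then x $ i else 1)" by (rule prod.cong) auto
    also have "\<dots> = x $ i" using prod.delta[of UNIV i "\<lambda>_. x $ i"] by simp
    finally show "mon (\<lambda>j. if j = i then 1 else 0) x = x $ i" by (simp add: mon_def prod.delta)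
  qed
  ultimately show ?thesis by simp
qed

lemma continuous_on_mon: "continuous_on S (mon \<alpha>)"
  unfolding mon_def by (intro continuous_intros)

lemma poly_deg_continuous: "poly_deg d p \<Longrightarrow> continuous_on S p"
  unfolding poly_deg_iff by (auto intro!: continuous_intros continuous_on_mon)

lemma polynomial_fun_continuous: "polynomial_fun p \<Longrightarrow> continuous_on S p"
  unfolding polynomial_fun_def using poly_deg_continuous by blast

lemma polynomial_fun_ring: "compact S \<Longrightarrow> function_ring_on {p. polynomial_fun p} (S :: (real^'n) set)"
proof (unfold_locales, goal_cases)
  case (2 f) then show ?case by (auto intro: polynomial_fun_continuous)
next
  case (3 f g) then show ?case
  proof -
    from 3 obtain d e where "poly_deg d f" "poly_deg e g" by (auto simp: polynomial_fun_def)
    then have "poly_deg (max d e) f" "poly_deg (max d e) g" by (auto intro: poly_deg_mono_deg)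
    then show ?thesis by (auto simp: polynomial_fun_def intro: poly_deg_add)
  qed
next
  case (4 f g) then show ?case by (auto simp: polynomial_fun_def intro: poly_deg_mult)
next
  case (5 c) then show ?case using poly_deg_const by (auto simp: polynomial_fun_def)
next
  case (6 x y)
  then obtain i where "x $ i \<noteq> y $ i" by (metis vec_eq_iff)
  then show ?case using poly_deg_coord[of i] by (auto simp: polynomial_fun_def)
qed simp

definition sqi :: "'a measure \<Rightarrow> ('a \<Rightarrow> real) \<Rightarrow> bool" where
  "sqi M u \<longleftrightarrow> u \<in> borel_measurable M \<and> integrable M (\<lambda>x. (u x)^2)"

definition ip :: "'a measure \<Rightarrow> ('a \<Rightarrow> real) \<Rightarrow> ('a \<Rightarrow> real) \<Rightarrow> real" where
  "ip M u v = (\<integral>x. u x * v x \<partial>M)"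

lemma sqi_prod: assumes "sqi M u" "sqi M v" shows "integrable M (\<lambda>x. u x * v x)"
proof (rule Bochner_Integration.integrable_bound[where f="\<lambda>x. (u x)^2 + (v x)^2"])
  show "integrable M (\<lambda>x. (u x)^2 + (v x)^2)" using assms by (auto simp: sqi_def)
  show "(\<lambda>x. u x * v x) \<in> borel_measurable M" using assms by (auto simp: sqi_def)
  show "AE x in M. norm (u x * v x) \<le> norm ((u x)^2 + (v x)^2)"
  proof (intro AE_I2)
    fix x
    have "2 * \<bar>u x * v x\<bar> \<le> (u x)^2 + (v x)^2"
      using sum_squares_bound[of "\<bar>u x\<bar>" "\<bar>v x\<bar>"] by (simp add: abs_mult power2_abs)
    moreover have "0 \<le> (u x)^2 + (v x)^2" by simp
    ultimately show "norm (u x * v x) \<le> norm ((u x)^2 + (v x)^2)" by simp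
  qed
qed

lemma sqi_add: assumes "sqi M u" "sqi M v" shows "sqi M (\<lambda>x. u x + v x)"
proof -
  have "integrable M (\<lambda>x. (u x)^2 + 2 * (u x * v x) + (v x)^2)"
    using assms sqi_prod[OF assms] by (auto simp: sqi_def)
  moreover have "(\<lambda>x. (u x + v x)^2) = (\<lambda>x. (u x)^2 + 2 * (u x * v x) + (v x)^2)"
    by (auto simp: power2_sum)
  moreover have "(\<lambda>x. u x + v x) \<in> borel_measurable M" using assms by (auto simp: sqi_def)
  ultimately show ?thesis by (simp add: sqi_def)
qed

lemma sqi_cmult: assumes "sqi M u" shows "sqi M (\<lambda>x. a * u x)"
  using assms by (auto simp: sqi_def power_mult_distrib)

lemma sqi_uminus: assumes "sqi M u" shows "sqi M (\<lambda>x. - u x)"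
  using sqi_cmult[OF assms, of "-1"] by simp

lemma sqi_diff: assumes "sqi M u" "sqi M v" shows "sqi M (\<lambda>x. u x - v x)"
  using sqi_add[OF assms(1) sqi_uminus[OF assms(2)]] by simp

lemma sqi_zero: "sqi M (\<lambda>x. 0)"
  by (simp add: sqi_def)

lemma sqi_sum: assumes "finite I" "\<And>i. i \<in> I \<Longrightarrow> sqi M (b i)"
  shows "sqi M (\<lambda>x. \<Sum>i\<in>I. b i x)"
  using assms by (induction I rule: finite_induct) (auto intro: sqi_add sqi_zero)

lemma sqi_lincomb: assumes "finite I" "\<And>i. i \<in> I \<Longrightarrow> sqi M (b i)"
  shows "sqi M (\<lambda>x. \<Sum>i\<in>I. c i * b i x)"
  using assms by (intro sqi_sum sqi_cmult) auto

lemma ip_sym: "ip M u v = ip M v u"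
  by (simp add: ip_def mult.commute)

lemma ip_add_left: assumes "sqi M u" "sqi M v" "sqi M w"
  shows "ip M (\<lambda>x. u x + v x) w = ip M u w + ip M v w"
  unfolding ip_def distrib_right using sqi_prod assms by (intro Bochner_Integration.integral_add) auto

lemma ip_diff_left: assumes "sqi M u" "sqi M v" "sqi M w"
  shows "ip M (\<lambda>x. u x - v x) w = ip M u w - ip M v w"
  unfolding ip_def left_diff_distrib using sqi_prod assms by (intro Bochner_Integration.integral_diff) auto

lemma ip_cmult_left: "ip M (\<lambda>x. a * u x) w = a * ip M u w"
  unfolding ip_def by (simp add: mult.assoc)

lemma ip_sum_left: assumes "finite I" "\<And>i. i \<in> I \<Longrightarrow> sqi M (b i)" "sqi M w"
  shows "ip M (\<lambda>x. \<Sum>i\<in>I. b i x) w = (\<Sum>i\<in>I. ip M (b i) w)"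
  unfolding ip_def sum_distrib_right by (rule Bochner_Integration.integral_sum[where f="\<lambda>i x. b i x * w x"]) (use assms sqi_prod in blast)

lemma ip_lincomb_left: assumes "finite I" "\<And>i. i \<in> I \<Longrightarrow> sqi M (b i)" "sqi M w"
  shows "ip M (\<lambda>x. \<Sum>i\<in>I. c i * b i x) w = (\<Sum>i\<in>I. c i * ip M (b i) w)"
  using assms by (subst ip_sum_left) (auto intro: sqi_cmult simp: ip_cmult_left)

lemma ip_self_nonneg: "0 \<le> ip M u u"
  unfolding ip_def by (intro integral_nonneg_AE) auto

lemma ip_self_zero: assumes "sqi M u" "ip M u u = 0" shows "AE x in M. u x = 0"
proof -
  have "AE x in M. u x * u x = 0"
    using assms integral_nonneg_eq_0_iff_AE[of M "\<lambda>x. u x * u x"]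
    by (auto simp: ip_def sqi_def power2_eq_square)
  then show ?thesis by auto
qed

lemma ip_null_left: assumes "sqi M u" "ip M u u = 0" "sqi M v" shows "ip M u v = 0"
proof -
  have "AE x in M. u x * v x = 0" using ip_self_zero[OF assms(1,2)] by auto
  then have "ip M u v = (\<integral>x. 0 \<partial>M)" unfolding ip_def by (intro integral_cong_AE) (use assms in \<open>auto simp: sqi_def\<close>)
  then show ?thesis by simp
qed

lemma proj_exists:
  assumes "finite I" "\<And>i. i \<in> I \<Longrightarrow> sqi M (b i)" "sqi M h"
  shows "\<exists>c. \<forall>j\<in>I. ip M (\<lambda>x. h x - (\<Sum>i\<in>I. c i * b i x)) (b j) = 0"
  using assms
proof (induction I arbitrary: h rule: finite_induct)
  case empty then show ?case by simp
next
  case (insert k I)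
  have bI: "\<And>i. i \<in> I \<Longrightarrow> sqi M (b i)" and bk: "sqi M (b k)" using insert.prems by auto
  obtain c0 where c0: "\<forall>j\<in>I. ip M (\<lambda>x. h x - (\<Sum>i\<in>I. c0 i * b i x)) (b j) = 0"
    using insert.IH[OF bI insert.prems(2)] by blast
  obtain ct where ct: "\<forall>j\<in>I. ip M (\<lambda>x. b k x - (\<Sum>i\<in>I. ct i * b i x)) (b j) = 0"
    using insert.IH[OF bI bk] by blast
  define g0 where "g0 = (\<lambda>x. \<Sum>i\<in>I. c0 i * b i x)"
  define t where "t = (\<lambda>x. \<Sum>i\<in>I. ct i * b i x)"
  define r where "r = (\<lambda>x. b k x - t x)"
  define w where "w = (\<lambda>x. h x - g0 x)"
  have sg0: "sqi M g0" unfolding g0_def using insert.hyps bI by (intro sqi_lincomb) auto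
  have st: "sqi M t" unfolding t_def using insert.hyps bI by (intro sqi_lincomb) auto
  have sr: "sqi M r" unfolding r_def using st bk by (intro sqi_diff) auto
  have sw: "sqi M w" unfolding w_def using sg0 insert.prems(2) by (intro sqi_diff) auto
  have wI: "ip M w (b j) = 0" if "j \<in> I" for j using c0 that unfolding w_def g0_def by auto
  have rI: "ip M r (b j) = 0" if "j \<in> I" for j using ct that unfolding r_def t_def by auto
  have wt: "ip M w t = 0"
    unfolding t_def using insert.hyps bI sw wI
    by (subst ip_sym, subst ip_lincomb_left) (auto simp: ip_sym)
  have rt: "ip M r t = 0"
    unfolding t_def using insert.hyps bI sr rI
    by (subst ip_sym, subst ip_lincomb_left) (auto simp: ip_sym)
  have bk_eq: "b k = (\<lambda>x. t x + r x)" unfolding r_def by auto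
  define a where "a = ip M w r"
  define \<beta> where "\<beta> = ip M r r"
  show ?case
  proof (cases "\<beta> = 0")
    case True
    have a0: "a = 0" unfolding a_def using ip_null_left[OF sr True[unfolded \<beta>_def] sw] ip_sym[of M w r] by simp
    define c where "c = (\<lambda>i. if i = k then 0 else c0 i)"
    have sumeq: "(\<Sum>i\<in>insert k I. c i * b i x) = g0 x" for x
      unfolding g0_def c_def using insert.hyps by (auto intro!: sum.cong)
    have "ip M w (b k) = 0"
      unfolding bk_eq using ip_add_left[OF st sr sw] wt a0 by (simp add: ip_sym a_def)
    then show ?thesis using wI sumeq
      by (intro exI[of _ c]) (auto simp: w_def)
  next
    case False
    define c where "c = (\<lambda>i. if i = k then a / \<beta> else c0 i - a / \<beta> * ct i)"
    have sumeq: "(\<Sum>i\<in>insert k I. c i * b i x) = g0 x + a / \<beta> * r x" for x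
    proof -
      have "(\<Sum>i\<in>insert k I. c i * b i x) = a / \<beta> * b k x + (\<Sum>i\<in>I. c i * b i x)"
        using insert.hyps by (simp add: c_def)
      also have "(\<Sum>i\<in>I. c i * b i x) = (\<Sum>i\<in>I. c0 i * b i x - a / \<beta> * (ct i * b i x))"
        using insert.hyps by (intro sum.cong) (auto simp: c_def algebra_simps)
      also have "\<dots> = g0 x - a / \<beta> * t x"
        by (simp add: g0_def t_def sum_subtractf sum_distrib_left)
      finally show ?thesis by (simp add: r_def algebra_simps)
    qed
    define w' where "w' = (\<lambda>x. w x - a / \<beta> * r x)"
    have sw': "sqi M w'" unfolding w'_def using sw sr by (intro sqi_diff sqi_cmult)
    have w'eq: "(\<lambda>x. h x - (\<Sum>i\<in>insert k I. c i * b i x)) = w'"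
      by (auto simp: sumeq w'_def w_def)
    have ipw': "ip M w' v = ip M w v - a / \<beta> * ip M r v" if "sqi M v" for v
      unfolding w'_def using ip_diff_left[OF sw sqi_cmult[OF sr, of "a / \<beta>"] that] ip_cmult_left[of M "a / \<beta>" r v] by simp
    have "ip M w' (b j) = 0" if "j \<in> I" for j using ipw'[OF bI[OF that]] wI[OF that] rI[OF that] by simp
    moreover have "ip M w' (b k) = 0"
    proof -
      have "ip M w' (b k) = ip M w' t + ip M w' r"
        unfolding bk_eq by (subst ip_sym, subst ip_add_left[OF st sr sw']) (simp add: ip_sym)
      also have "\<dots> = 0" using ipw'[OF st] ipw'[OF sr] wt rt False
        by (simp add: a_def \<beta>_def ip_sym)
      finally show ?thesis .
    qed
    ultimately have "\<forall>j\<in>insert k I. ip M w' (b j) = 0" by auto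
    then have "\<forall>j\<in>insert k I. ip M (\<lambda>x. h x - (\<Sum>i\<in>insert k I. c i * b i x)) (b j) = 0"
      by (simp only: w'eq)
    then show ?thesis by blast
  qed
qed

lemma ip_expand: assumes "sqi M u" "sqi M v"
  shows "ip M (\<lambda>x. u x + v x) (\<lambda>x. u x + v x) = ip M u u + 2 * ip M u v + ip M v v"
proof -
  have s: "sqi M (\<lambda>x. u x + v x)" using assms by (rule sqi_add)
  have "ip M (\<lambda>x. u x + v x) (\<lambda>x. u x + v x) = ip M u (\<lambda>x. u x + v x) + ip M v (\<lambda>x. u x + v x)"
    by (rule ip_add_left[OF assms s])
  also have "ip M u (\<lambda>x. u x + v x) = ip M u u + ip M u v"
    using ip_add_left[OF assms assms(1)] ip_sym[of M u "\<lambda>x. u x + v x"] ip_sym[of M v u] by simp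
  also have "ip M v (\<lambda>x. u x + v x) = ip M u v + ip M v v"
    using ip_add_left[OF assms assms(2)] ip_sym[of M v "\<lambda>x. u x + v x"] ip_sym[of M v u] by simp
  finally show ?thesis by simp
qed

lemma proj_facts:
  fixes W :: "nat \<Rightarrow> ('a \<Rightarrow> real) set"
  assumes Wsqi: "\<And>d p. p \<in> W d \<Longrightarrow> sqi M p"
    and Wdiff: "\<And>d p q. p \<in> W d \<Longrightarrow> q \<in> W d \<Longrightarrow> (\<lambda>x. p x - q x) \<in> W d"
    and Wmono: "\<And>d. W d \<subseteq> W (Suc d)"
    and h: "sqi M h"
    and gW: "\<And>d. g d \<in> W d"
    and gorth: "\<And>d p. p \<in> W d \<Longrightarrow> ip M (\<lambda>x. h x - g d x) p = 0"
  shows "\<And>d. ip M (g d) (g d) = ip M h h - ip M (\<lambda>x. h x - g d x) (\<lambda>x. h x - g d x)"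
    and "\<And>d q. q \<in> W d \<Longrightarrow> ip M (\<lambda>x. h x - g d x) (\<lambda>x. h x - g d x) \<le> ip M (\<lambda>x. h x - q x) (\<lambda>x. h x - q x)"
    and "\<And>d. ip M (g d) (g d) \<le> ip M h h"
    and "incseq (\<lambda>d. ip M (g d) (g d))"
    and "convergent (\<lambda>d. ip M (g d) (g d))"
    and "(\<And>\<eta>. \<eta> > 0 \<Longrightarrow> \<exists>d q. q \<in> W d \<and> ip M (\<lambda>x. h x - q x) (\<lambda>x. h x - q x) < \<eta>) \<Longrightarrow>
          (\<lambda>d. ip M (g d) (g d)) \<longlonglongrightarrow> ip M h h"
proof -
  have sg: "sqi M (g d)" for d using Wsqi gW by blast
  have se: "sqi M (\<lambda>x. h x - g d x)" for d using sqi_diff[OF h sg] .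
  define E where "E d = ip M (\<lambda>x. h x - g d x) (\<lambda>x. h x - g d x)" for d
  show A: "ip M (g d) (g d) = ip M h h - ip M (\<lambda>x. h x - g d x) (\<lambda>x. h x - g d x)" for d
  proof -
    have "ip M h h = ip M (\<lambda>x. (h x - g d x) + g d x) (\<lambda>x. (h x - g d x) + g d x)" by simp
    also have "\<dots> = ip M (\<lambda>x. h x - g d x) (\<lambda>x. h x - g d x) + 2 * ip M (\<lambda>x. h x - g d x) (g d) + ip M (g d) (g d)"
      by (rule ip_expand[OF se sg])
    finally show ?thesis using gorth[OF gW] by simp
  qed
  show B: "ip M (\<lambda>x. h x - g d x) (\<lambda>x. h x - g d x) \<le> ip M (\<lambda>x. h x - q x) (\<lambda>x. h x - q x)" if q: "q \<in> W d" for d q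
  proof -
    have sq: "sqi M (\<lambda>x. g d x - q x)" using Wsqi[OF Wdiff[OF gW q]] .
    have "ip M (\<lambda>x. h x - q x) (\<lambda>x. h x - q x) = ip M (\<lambda>x. (h x - g d x) + (g d x - q x)) (\<lambda>x. (h x - g d x) + (g d x - q x))" by simp
    also have "\<dots> = ip M (\<lambda>x. h x - g d x) (\<lambda>x. h x - g d x) + 2 * ip M (\<lambda>x. h x - g d x) (\<lambda>x. g d x - q x) + ip M (\<lambda>x. g d x - q x) (\<lambda>x. g d x - q x)"
      by (rule ip_expand[OF se sq])
    finally show ?thesis using gorth[OF Wdiff[OF gW q]] ip_self_nonneg[of M "\<lambda>x. g d x - q x"] by simp
  qed
  show C: "ip M (g d) (g d) \<le> ip M h h" for d using A[of d] ip_self_nonneg[of M "\<lambda>x. h x - g d x"] by simp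
  show D: "incseq (\<lambda>d. ip M (g d) (g d))"
  proof (rule incseq_SucI)
    fix d
    have "g d \<in> W (Suc d)" using Wmono gW by blast
    from B[OF this] show "ip M (g d) (g d) \<le> ip M (g (Suc d)) (g (Suc d))" using A[of d] A[of "Suc d"] by simp
  qed
  show "convergent (\<lambda>d. ip M (g d) (g d))"
  proof -
    obtain L where "(\<lambda>d. ip M (g d) (g d)) \<longlonglongrightarrow> L" using incseq_convergent[OF D, of "ip M h h"] C by blast
    then show ?thesis by (auto simp: convergent_def)
  qed
  assume approx: "\<And>\<eta>. \<eta> > 0 \<Longrightarrow> \<exists>d q. q \<in> W d \<and> ip M (\<lambda>x. h x - q x) (\<lambda>x. h x - q x) < \<eta>"
  have WmonoLe: "W d \<subseteq> W d'" if "d \<le> d'" for d d'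
    using lift_Suc_mono_le[of W, OF Wmono that] .
  show "(\<lambda>d. ip M (g d) (g d)) \<longlonglongrightarrow> ip M h h"
  proof (rule LIMSEQ_I)
    fix r :: real assume "r > 0"
    then obtain d0 q where q: "q \<in> W d0" "ip M (\<lambda>x. h x - q x) (\<lambda>x. h x - q x) < r" using approx by blast
    have "norm (ip M (g d) (g d) - ip M h h) < r" if "d \<ge> d0" for d
    proof -
      have "q \<in> W d" using WmonoLe[OF that] q by blast
      from B[OF this] q(2) A[of d] C[of d] show ?thesis by simp
    qed
    then show "\<exists>no. \<forall>n\<ge>no. norm (ip M (g n) (g n) - ip M h h) < r" by blast
  qed
qed

lemma cont_L1_dense:
  fixes M :: "('a::euclidean_space) measure" and u :: "'a \<Rightarrow> real"
  assumes sets: "sets M = sets borel" and fin: "finite_measure M" and u: "integrable M u"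
  shows "\<forall>e>0. \<exists>g. continuous_on UNIV g \<and> integrable M g \<and> (\<integral>x. \<bar>u x - g x\<bar> \<partial>M) < e"
  using u
proof (induction rule: integrable_induct)
  case (base A c)
  interpret finite_measure M by (rule fin)
  have meas_cont: "g \<in> borel_measurable M" if "continuous_on UNIV g" for g :: "'a \<Rightarrow> real"
    using borel_measurable_continuous_onI[OF that] by (simp add: measurable_cong_sets[OF sets refl])
  show ?case
  proof (intro allI impI)
    fix e :: real assume e: "e > 0"
    define \<delta> where "\<delta> = e / (2 * (\<bar>c\<bar> + 1))"
    have \<delta>: "\<delta> > 0" using e by (simp add: \<delta>_def)
    have Ab: "A \<in> sets borel" using base sets by simp
    have fin': "emeasure M (space M) \<noteq> \<infinity>" by (simp add: emeasure_eq_measure)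
    obtain C where C: "C \<subseteq> A" "compact C" "emeasure M A < emeasure M C + ennreal \<delta>"
    proof -
      have ne: "{K. K \<subseteq> A \<and> compact K} \<noteq> {}" by (metis (mono_tags, lifting) compact_empty empty_Collect_eq empty_subsetI)
      from SUP_approx_ennreal[OF \<delta> ne inner_regular[OF sets fin' Ab]]
      show ?thesis using that by auto
    qed
    obtain U where U: "A \<subseteq> U" "open U" "emeasure M U < emeasure M A + ennreal \<delta>"
    proof -
      have "emeasure M A \<noteq> \<infinity>" by (simp add: emeasure_eq_measure)
      from INF_approx_ennreal[OF \<delta> outer_regular[OF sets fin' Ab] this]
      show ?thesis using that by auto
    qed
    have Cs: "C \<in> sets M" using C(2) sets by (simp add: borel_compact)
    have Us: "U \<in> sets M" using U(2) sets by simp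
    have mC: "measure M A < measure M C + \<delta>"
      using C(3) \<delta> by (simp add: emeasure_eq_measure ennreal_plus[symmetric] ennreal_less_iff add_nonneg_nonneg del: ennreal_plus)
    have mU: "measure M U < measure M A + \<delta>"
      using U(3) \<delta> by (simp add: emeasure_eq_measure ennreal_plus[symmetric] ennreal_less_iff add_nonneg_nonneg del: ennreal_plus)
    have mUC: "measure M (U - C) < 2 * \<delta>"
      using finite_measure_Diff[OF Us Cs] C(1) U(1) mC mU by auto
    obtain g0 :: "'a \<Rightarrow> real" where g0: "continuous_on UNIV g0" "\<And>x. g0 x \<in> closed_segment 1 0"
      "\<And>x. x \<in> C \<Longrightarrow> g0 x = 1" "\<And>x. x \<in> - U \<Longrightarrow> g0 x = 0"
      using Urysohn[of C "- U" 1 0] C U compact_imp_closed by blast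
    have g01: "0 \<le> g0 x \<and> g0 x \<le> 1" for x using g0(2)[of x] by (simp add: closed_segment_eq_real_ivl)
    define g where "g = (\<lambda>x. g0 x * c)"
    have gc: "continuous_on UNIV g" unfolding g_def by (intro continuous_intros g0(1))
    have gi: "integrable M g"
    proof (rule integrable_const_bound[where B="\<bar>c\<bar>"])
      show "AE x in M. norm (g x) \<le> \<bar>c\<bar>" using g01 by (auto simp: g_def abs_mult intro!: mult_left_le_one_le)
      show "g \<in> borel_measurable M" using meas_cont[OF gc] .
    qed
    have pw: "\<bar>indicator A x *\<^sub>R c - g x\<bar> \<le> \<bar>c\<bar> * indicator (U - C) x" for x
    proof -
      consider "x \<in> C" | "x \<notin> U" | "x \<in> U - C" by blast
      then show ?thesis
      proof cases
        case 1 then show ?thesis using g0(3) C(1) by (auto simp: g_def indicator_def)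
      next
        case 2 then show ?thesis using g0(4) U(1) by (auto simp: g_def indicator_def)
      next
        case 3
        have "\<bar>indicator A x - g0 x\<bar> \<le> 1" using g01[of x] by (auto simp: indicator_def)
        then have "\<bar>c\<bar> * \<bar>indicator A x - g0 x\<bar> \<le> \<bar>c\<bar>" using mult_left_mono[of _ 1 "\<bar>c\<bar>"] by fastforce
        moreover have "\<bar>indicator A x *\<^sub>R c - g x\<bar> = \<bar>c\<bar> * \<bar>indicator A x - g0 x\<bar>"
          by (simp add: g_def abs_mult[symmetric] algebra_simps)
        ultimately show ?thesis using 3 by (simp add: indicator_def)
      qed
    qed
    have ii: "integrable M (\<lambda>x. \<bar>c\<bar> * indicator (U - C) x)"
      using Us Cs by (intro integrable_mult_right integrable_real_indicator) (auto simp: emeasure_eq_measure)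
    have "(\<integral>x. \<bar>indicator A x *\<^sub>R c - g x\<bar> \<partial>M) \<le> (\<integral>x. \<bar>c\<bar> * indicator (U - C) x \<partial>M)"
    proof (rule integral_mono[OF _ ii])
      show "integrable M (\<lambda>x. \<bar>indicator A x *\<^sub>R c - g x\<bar>)"
        using base gi by (intro integrable_abs Bochner_Integration.integrable_diff) (auto simp: emeasure_eq_measure)
    qed (use pw in auto)
    also have "\<dots> = \<bar>c\<bar> * measure M (U - C)" using Us Cs by simp
    also have "\<dots> \<le> \<bar>c\<bar> * (2 * \<delta>)" using mUC by (intro mult_left_mono) auto
    also have "\<dots> < e" using e by (simp add: \<delta>_def field_simps)
    finally show "\<exists>g. continuous_on UNIV g \<and> integrable M g \<and> (\<integral>x. \<bar>indicator A x *\<^sub>R c - g x\<bar> \<partial>M) < e"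
      using gc gi by blast
  qed
next
  case (add f g)
  show ?case
  proof (intro allI impI)
    fix e :: real assume e: "e > 0"
    obtain gf where gf: "continuous_on UNIV gf" "integrable M gf" "(\<integral>x. \<bar>f x - gf x\<bar> \<partial>M) < e/2"
      using add.IH(1) e by (meson half_gt_zero)
    obtain gg where gg: "continuous_on UNIV gg" "integrable M gg" "(\<integral>x. \<bar>g x - gg x\<bar> \<partial>M) < e/2"
      using add.IH(2) e by (meson half_gt_zero)
    have i1: "integrable M (\<lambda>x. \<bar>f x - gf x\<bar>)" using add gf by auto
    have i2: "integrable M (\<lambda>x. \<bar>g x - gg x\<bar>)" using add gg by auto
    have "(\<integral>x. \<bar>(f x + g x) - (gf x + gg x)\<bar> \<partial>M) \<le> (\<integral>x. \<bar>f x - gf x\<bar> + \<bar>g x - gg x\<bar> \<partial>M)"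
      by (rule integral_mono) (use add gf gg i1 i2 in auto)
    also have "\<dots> = (\<integral>x. \<bar>f x - gf x\<bar> \<partial>M) + (\<integral>x. \<bar>g x - gg x\<bar> \<partial>M)"
      using i1 i2 by simp
    also have "\<dots> < e" using gf gg by simp
    finally show "\<exists>h. continuous_on UNIV h \<and> integrable M h \<and> (\<integral>x. \<bar>(f x + g x) - h x\<bar> \<partial>M) < e"
      using gf gg by (intro exI[of _ "\<lambda>x. gf x + gg x"]) (auto intro: continuous_intros)
  qed
next
  case (lim f s)
  show ?case
  proof (intro allI impI)
    fix e :: real assume e: "e > 0"
    have conv: "(\<lambda>i. \<integral>x. \<bar>f x - s i x\<bar> \<partial>M) \<longlonglongrightarrow> (\<integral>x. 0 \<partial>M)"
    proof (rule integral_dominated_convergence[where w="\<lambda>x. 3 * \<bar>f x\<bar>"])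
      show "AE x in M. (\<lambda>i. \<bar>f x - s i x\<bar>) \<longlonglongrightarrow> 0"
      proof (intro AE_I2)
        fix x assume "x \<in> space M"
        then have "(\<lambda>i. f x - s i x) \<longlonglongrightarrow> f x - f x" using lim.hyps(2) by (intro tendsto_intros) auto
        then show "(\<lambda>i. \<bar>f x - s i x\<bar>) \<longlonglongrightarrow> 0" using tendsto_rabs by fastforce
      qed
      show "AE x in M. norm \<bar>f x - s i x\<bar> \<le> 3 * \<bar>f x\<bar>" for i
      proof (intro AE_I2)
        fix x assume "x \<in> space M"
        then have "\<bar>s i x\<bar> \<le> 2 * \<bar>f x\<bar>" using lim.hyps(3)[of x i] by simp
        moreover have "\<bar>f x - s i x\<bar> \<le> \<bar>f x\<bar> + \<bar>s i x\<bar>" by (rule abs_triangle_ineq4)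
        ultimately show "norm \<bar>f x - s i x\<bar> \<le> 3 * \<bar>f x\<bar>" by simp
      qed
    qed (use lim in auto)
    then obtain i where i: "(\<integral>x. \<bar>f x - s i x\<bar> \<partial>M) < e/2"
      using e by (auto dest!: LIMSEQ_D[of _ _ "e/2"])
    obtain gi where gi: "continuous_on UNIV gi" "integrable M gi" "(\<integral>x. \<bar>s i x - gi x\<bar> \<partial>M) < e/2"
      using lim.IH[of i] e by (meson half_gt_zero)
    have i1: "integrable M (\<lambda>x. \<bar>f x - s i x\<bar>)" using lim by auto
    have i2: "integrable M (\<lambda>x. \<bar>s i x - gi x\<bar>)" using lim gi by auto
    have "(\<integral>x. \<bar>f x - gi x\<bar> \<partial>M) \<le> (\<integral>x. \<bar>f x - s i x\<bar> + \<bar>s i x - gi x\<bar> \<partial>M)"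
      by (rule integral_mono) (use lim gi i1 i2 in auto)
    also have "\<dots> = (\<integral>x. \<bar>f x - s i x\<bar> \<partial>M) + (\<integral>x. \<bar>s i x - gi x\<bar> \<partial>M)"
      using i1 i2 by simp
    also have "\<dots> < e" using i gi by simp
    finally show "\<exists>g. continuous_on UNIV g \<and> integrable M g \<and> (\<integral>x. \<bar>f x - g x\<bar> \<partial>M) < e"
      using gi by blast
  qed
qed

lemma sq_sum_le: "(a + b)^2 \<le> 2 * a^2 + 2 * (b::real)^2"
  by (smt (verit) sum_squares_bound power2_sum)

lemma sqi_cont:
  fixes M :: "('a::euclidean_space) measure"
  assumes sets: "sets M = sets borel" and fin: "finite_measure M" and K: "compact K"
    and AEK: "AE x in M. x \<in> K" and q: "continuous_on UNIV q"
  shows "sqi M (q :: 'a \<Rightarrow> real)"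
proof -
  interpret finite_measure M by (rule fin)
  have qm: "q \<in> borel_measurable M"
    using borel_measurable_continuous_onI[OF q] by (simp add: measurable_cong_sets[OF sets refl])
  have "compact (q ` K)" using K q by (intro compact_continuous_image) (auto intro: continuous_on_subset)
  then obtain B where B: "\<And>x. x \<in> K \<Longrightarrow> \<bar>q x\<bar> \<le> B"
    using compact_imp_bounded[of "q ` K"] by (auto simp: bounded_iff)
  have qB: "(q x)^2 \<le> B^2" if "x \<in> K" for x using power_mono[OF B[OF that], of 2] by simp
  have "AE x in M. norm ((q x)^2) \<le> B^2"
    using AEK by eventually_elim (use qB in simp)
  then have "integrable M (\<lambda>x. (q x)^2)" using qm by (intro integrable_const_bound[where B="B^2"]) auto
  then show ?thesis using qm by (simp add: sqi_def)
qed

lemma sqi_bounded: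
  fixes M :: "'a measure"
  assumes fin: "finite_measure M" and u: "u \<in> borel_measurable M" and B: "\<And>x. \<bar>u x\<bar> \<le> B"
  shows "sqi M u"
proof -
  interpret finite_measure M by (rule fin)
  have uB: "(u x)^2 \<le> B^2" for x using power_mono[OF B[of x], of 2] by simp
  have "AE x in M. norm ((u x)^2) \<le> B^2"
    using uB by (intro AE_I2) simp
  then have "integrable M (\<lambda>x. (u x)^2)" using u by (intro integrable_const_bound[where B="B^2"]) auto
  then show ?thesis using u by (simp add: sqi_def)
qed

lemma bdd_poly_approx:
  fixes M :: "(real^'n) measure"
  assumes sets: "sets M = sets borel" and fin: "finite_measure M" and K: "compact K"
    and AEK: "AE x in M. x \<in> K" and um: "u \<in> borel_measurable M" and uB: "\<And>x. \<bar>u x\<bar> \<le> B"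
    and \<eta>: "\<eta> > 0"
  shows "\<exists>q. polynomial_fun q \<and> ip M (\<lambda>x. u x - q x) (\<lambda>x. u x - q x) < \<eta>"
proof -
  interpret finite_measure M by (rule fin)
  have B0: "0 \<le> B" using uB[of undefined] by linarith
  define m where "m = measure M (space M)"
  have m0: "0 \<le> m" by (simp add: m_def)
  have ui: "integrable M u" using um uB by (intro integrable_const_bound[where B=B]) auto
  define \<eta>1 where "\<eta>1 = \<eta> / (8 * (B + 1))"
  have \<eta>1: "\<eta>1 > 0" using \<eta> B0 by (simp add: \<eta>1_def)
  obtain g where g: "continuous_on UNIV g" "integrable M g" "(\<integral>x. \<bar>u x - g x\<bar> \<partial>M) < \<eta>1"
    using cont_L1_dense[OF sets fin ui] \<eta>1 by blast
  define g' where "g' = (\<lambda>x. max (-B) (min B (g x)))"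
  have g'c: "continuous_on UNIV g'" unfolding g'_def by (intro continuous_intros g(1))
  have pw1: "\<bar>u x - g' x\<bar> \<le> \<bar>u x - g x\<bar>" for x using uB[of x] by (auto simp: g'_def)
  have pw2: "\<bar>u x - g' x\<bar> \<le> 2 * B" for x using uB[of x] by (auto simp: g'_def)
  define \<delta> where "\<delta> = sqrt (\<eta> / (8 * (m + 1)))"
  have \<delta>: "\<delta> > 0" using \<eta> m0 by (simp add: \<delta>_def)
  have \<delta>sq: "\<delta>^2 = \<eta> / (8 * (m + 1))" using \<eta> m0 by (simp add: \<delta>_def)
  interpret R: function_ring_on "{p. polynomial_fun p}" K by (rule polynomial_fun_ring[OF K])
  obtain q where q: "polynomial_fun q" "\<And>x. x \<in> K \<Longrightarrow> \<bar>g' x - q x\<bar> < \<delta>"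
    using R.Stone_Weierstrass_basic[OF continuous_on_subset[OF g'c] \<delta>] by auto
  have qc: "continuous_on UNIV q" using q(1) by (rule polynomial_fun_continuous)
  have us: "sqi M u" using sqi_bounded[OF fin um uB] .
  have qs: "sqi M q" using sqi_cont[OF sets fin K AEK qc] .
  have dq: "sqi M (\<lambda>x. u x - q x)" using sqi_diff[OF us qs] .
  have bnd: "AE x in M. (u x - q x) * (u x - q x) \<le> 4 * B * \<bar>u x - g x\<bar> + 2 * \<delta>^2"
    using AEK
  proof eventually_elim
    case (elim x)
    have "(u x - q x) * (u x - q x) = ((u x - g' x) + (g' x - q x))^2" by (simp add: power2_eq_square)
    also have "\<dots> \<le> 2 * (u x - g' x)^2 + 2 * (g' x - q x)^2" by (rule sq_sum_le)
    also have "(u x - g' x)^2 \<le> 2 * B * \<bar>u x - g x\<bar>"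
    proof -
      have "(u x - g' x)^2 = \<bar>u x - g' x\<bar> * \<bar>u x - g' x\<bar>" by (simp add: power2_eq_square)
      also have "\<dots> \<le> (2 * B) * \<bar>u x - g x\<bar>" using pw1[of x] pw2[of x] by (intro mult_mono) auto
      finally show ?thesis .
    qed
    also have "(g' x - q x)^2 \<le> \<delta>^2"
      using q(2)[OF elim] by (metis abs_ge_zero less_imp_le power2_abs power_mono)
    finally show ?case by simp
  qed
  have ibnd: "integrable M (\<lambda>x. 4 * B * \<bar>u x - g x\<bar> + 2 * \<delta>^2)"
    using ui g(2) by (intro Bochner_Integration.integrable_add integrable_mult_right integrable_abs Bochner_Integration.integrable_diff) auto
  have "ip M (\<lambda>x. u x - q x) (\<lambda>x. u x - q x) \<le> (\<integral>x. 4 * B * \<bar>u x - g x\<bar> + 2 * \<delta>^2 \<partial>M)"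
    unfolding ip_def using sqi_prod[OF dq dq] ibnd bnd by (rule integral_mono_AE)
  also have "\<dots> = 4 * B * (\<integral>x. \<bar>u x - g x\<bar> \<partial>M) + 2 * \<delta>^2 * m"
    using ui g(2) by (simp add: m_def)
  also have "\<dots> < \<eta>"
  proof -
    have "4 * B * (\<integral>x. \<bar>u x - g x\<bar> \<partial>M) \<le> 4 * B * \<eta>1" using g(3) B0 by (intro mult_left_mono) auto
    also have "\<dots> < \<eta> / 2" using \<eta> B0 by (simp add: \<eta>1_def field_simps)
    finally have a: "4 * B * (\<integral>x. \<bar>u x - g x\<bar> \<partial>M) < \<eta> / 2" .
    have pos: "0 < 8 * (m + 1)" using m0 by simp
    have "2 * \<delta>^2 * m = (\<eta> / 4) * (m / (m + 1))" unfolding \<delta>sq using pos by (simp add: field_simps)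
    also have "\<dots> \<le> \<eta> / 4 * 1" using \<eta> m0 by (intro mult_left_mono) auto
    finally show ?thesis using a \<eta> by linarith
  qed
  finally show ?thesis using q(1) by blast
qed

lemma poly_approx_L2:
  fixes M :: "(real^'n) measure"
  assumes sets: "sets M = sets borel" and fin: "finite_measure M" and K: "compact K"
    and AEK: "AE x in M. x \<in> K" and u: "sqi M u" and \<eta>: "\<eta> > 0"
  shows "\<exists>q. polynomial_fun q \<and> ip M (\<lambda>x. u x - q x) (\<lambda>x. u x - q x) < \<eta>"
proof -
  interpret finite_measure M by (rule fin)
  have um: "u \<in> borel_measurable M" and u2: "integrable M (\<lambda>x. (u x)^2)" using u by (auto simp: sqi_def)
  define t where "t n x = max (- real n) (min (real n) (u x))" for n x
  have tm: "t n \<in> borel_measurable M" for n unfolding t_def using um by measurable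
  have tB: "\<bar>t n x\<bar> \<le> real n" for n x by (auto simp: t_def)
  have conv: "(\<lambda>n. \<integral>x. (u x - t n x)^2 \<partial>M) \<longlonglongrightarrow> (\<integral>x. 0 \<partial>M)"
  proof (rule integral_dominated_convergence[where w="\<lambda>x. (u x)^2"])
    show "AE x in M. (\<lambda>n. (u x - t n x)^2) \<longlonglongrightarrow> 0"
    proof (intro AE_I2)
      fix x
      have "eventually (\<lambda>n. (u x - t n x)^2 = 0) sequentially"
      proof (rule eventually_sequentiallyI[of "nat \<lceil>\<bar>u x\<bar>\<rceil>"])
        fix n assume "nat \<lceil>\<bar>u x\<bar>\<rceil> \<le> n"
        then have "\<bar>u x\<bar> \<le> real n" by linarith
        then show "(u x - t n x)^2 = 0" by (auto simp: t_def)
      qed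
      then show "(\<lambda>n. (u x - t n x)^2) \<longlonglongrightarrow> 0" by (rule tendsto_eventually)
    qed
    show "AE x in M. norm ((u x - t n x)^2) \<le> (u x)^2" for n
    proof (intro AE_I2)
      fix x
      have "\<bar>u x - t n x\<bar> \<le> \<bar>u x\<bar>" by (auto simp: t_def)
      then show "norm ((u x - t n x)^2) \<le> (u x)^2"
        by (metis abs_ge_zero power2_abs power_mono real_norm_def zero_le_power2 abs_of_nonneg)
    qed
  qed (use um tm u2 in auto)
  then obtain n where n: "(\<integral>x. (u x - t n x)^2 \<partial>M) < \<eta> / 4"
    using \<eta> by (auto dest!: LIMSEQ_D[of _ _ "\<eta>/4"])
  obtain q where q: "polynomial_fun q" "ip M (\<lambda>x. t n x - q x) (\<lambda>x. t n x - q x) < \<eta> / 4"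
    using bdd_poly_approx[OF sets fin K AEK tm tB, of "\<eta>/4"] \<eta> by auto
  have ts: "sqi M (t n)" using sqi_bounded[OF fin tm tB] .
  have qs: "sqi M q" using sqi_cont[OF sets fin K AEK polynomial_fun_continuous[OF q(1)]] .
  have s1: "sqi M (\<lambda>x. u x - t n x)" using sqi_diff[OF u ts] .
  have s2: "sqi M (\<lambda>x. t n x - q x)" using sqi_diff[OF ts qs] .
  have s3: "sqi M (\<lambda>x. u x - q x)" using sqi_diff[OF u qs] .
  have "ip M (\<lambda>x. u x - q x) (\<lambda>x. u x - q x) \<le> (\<integral>x. 2 * (u x - t n x)^2 + 2 * ((t n x - q x) * (t n x - q x)) \<partial>M)"
    unfolding ip_def
  proof (rule integral_mono)
    show "integrable M (\<lambda>x. (u x - q x) * (u x - q x))" by (rule sqi_prod[OF s3 s3])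
    show "integrable M (\<lambda>x. 2 * (u x - t n x)^2 + 2 * ((t n x - q x) * (t n x - q x)))"
      using s1 sqi_prod[OF s2 s2] by (auto simp: sqi_def)
    fix x
    have "(u x - q x) * (u x - q x) = ((u x - t n x) + (t n x - q x))^2" by (simp add: power2_eq_square)
    also have "\<dots> \<le> 2 * (u x - t n x)^2 + 2 * (t n x - q x)^2" by (rule sq_sum_le)
    finally show "(u x - q x) * (u x - q x) \<le> 2 * (u x - t n x)^2 + 2 * ((t n x - q x) * (t n x - q x))"
      by (simp add: power2_eq_square)
  qed
  also have "\<dots> = 2 * (\<integral>x. (u x - t n x)^2 \<partial>M) + 2 * ip M (\<lambda>x. t n x - q x) (\<lambda>x. t n x - q x)"
    unfolding ip_def using s1 sqi_prod[OF s2 s2] by (simp add: sqi_def)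
  also have "\<dots> < \<eta>" using n q(2) by simp
  finally show ?thesis using q(1) by blast
qed

lemma sqi_AE_cong: assumes "sqi M q" "p \<in> borel_measurable M" "AE x in M. p x = q x" shows "sqi M p"
proof -
  have "AE x in M. (p x)^2 = (q x)^2" using assms(3) by auto
  then have "integrable M (\<lambda>x. (p x)^2) = integrable M (\<lambda>x. (q x)^2)"
    using assms by (intro integrable_cong_AE) (auto simp: sqi_def)
  then show ?thesis using assms by (simp add: sqi_def)
qed

lemma ip_AE_cong: assumes "AE x in M. p x = q x" "AE x in M. p' x = q' x"
  "p \<in> borel_measurable M" "q \<in> borel_measurable M" "p' \<in> borel_measurable M" "q' \<in> borel_measurable M"
  shows "ip M p p' = ip M q q'"
  unfolding ip_def using assms by (intro integral_cong_AE) auto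

lemma closed_variety: assumes "real_alg_variety Z" shows "closed Z"
proof -
  obtain P where P: "finite P" "\<forall>p\<in>P. polynomial_fun p" "Z = {x. \<forall>p\<in>P. p x = 0}"
    using assms by (auto simp: real_alg_variety_def)
  have "Z = (\<Inter>p\<in>P. {x. p x = 0})" using P(3) by auto
  moreover have "closed {x. p x = 0}" if "p \<in> P" for p
    using P(2) that by (intro closed_Collect_eq polynomial_fun_continuous continuous_on_const) auto
  ultimately show ?thesis by auto
qed

locale dsetup =
  fixes Z X :: "(real^'n) set" and lam mu :: "(real^'n) measure" and E :: "real set"
    and \<phi> :: "real^'n \<Rightarrow> real \<Rightarrow> real^'n \<Rightarrow> real" and f F :: "real^'n \<Rightarrow> real"
  assumes var: "real_alg_variety Z"
    and slam: "sets lam = sets borel" and lamZ: "emeasure lam (UNIV - Z) = 0"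
    and moll: "L2_mollifiers Z lam E \<phi>"
    and finmu: "finite_measure mu"
    and Xsupp: "X = msupp mu" and Xc: "compact X"
    and intne: "(top_of_set Z) interior_of X \<noteq> {}"
    and zd: "zariski_dense X Z"
    and fc: "continuous_on X f" and fpos: "\<forall>y\<in>X. f y > 0"
    and mudef: "mu = density lam (\<lambda>y. ennreal (f y) * indicator X y)"
    and Fdef: "F = (\<lambda>y. indicator X y * f y)"
begin

lemma Zclosed: "closed Z" using var by (rule closed_variety)

lemma Xclosed: "closed X" using Xc by (rule compact_imp_closed)

lemma space_lam: "space lam = UNIV" using slam sets_eq_imp_space_eq by fastforce

lemma Fm: "F \<in> borel_measurable lam"
proof -
  have "(\<lambda>y. indicator X y *\<^sub>R f y) \<in> borel_measurable borel"
    using Xclosed fc by (intro borel_measurable_continuous_on_indicator) auto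
  then show ?thesis unfolding Fdef by (simp add: measurable_cong_sets[OF slam refl])
qed

lemma F_nonneg: "0 \<le> F y" using fpos by (auto simp: Fdef indicator_def less_imp_le)

lemma mu_eq: "mu = density lam (\<lambda>y. ennreal (F y))"
proof -
  have "(\<lambda>y. ennreal (f y) * indicator X y) = (\<lambda>y. ennreal (F y))"
    by (auto simp: Fdef indicator_def)
  then show ?thesis using mudef by simp
qed

lemma sets_mu: "sets mu = sets borel" using mu_eq slam by simp

lemma space_mu: "space mu = UNIV" using sets_mu sets_eq_imp_space_eq by fastforce

lemma meas_mu: "g \<in> borel_measurable lam \<Longrightarrow> g \<in> borel_measurable mu"
  using sets_mu slam by (simp add: measurable_cong_sets[OF sets_mu refl] measurable_cong_sets[OF slam refl])

lemma AE_mu_X: "AE y in mu. y \<in> X"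
proof -
  have "AE y in lam. 0 < ennreal (F y) \<longrightarrow> y \<in> X" by (intro AE_I2) (auto simp: Fdef indicator_def)
  then show ?thesis unfolding mu_eq using Fm by (subst AE_density) auto
qed

lemma AE_lam_Z: "AE y in lam. y \<in> Z"
proof -
  have "UNIV - Z \<in> sets lam" using Zclosed slam by auto
  then show ?thesis using lamZ by (subst AE_iff_measurable[where N="UNIV - Z"]) (auto simp: space_lam)
qed

lemma AE_mu_Z: "AE y in mu. y \<in> Z"
proof -
  have "AE y in lam. 0 < ennreal (F y) \<longrightarrow> y \<in> Z" using AE_lam_Z by auto
  then show ?thesis unfolding mu_eq using Fm by (subst AE_density) auto
qed

lemma null_open: assumes "open U" "AE y in mu. y \<notin> U" shows "U \<inter> X = {}"
proof -
  have "emeasure mu U = 0"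
    using assms sets_mu by (subst AE_iff_measurable[symmetric, where P="\<lambda>y. y \<notin> U"]) (auto simp: space_mu)
  then show ?thesis using assms(1) unfolding Xsupp msupp_def by auto
qed

lemma X_sub_Z: "X \<subseteq> Z"
proof -
  have "(- Z) \<inter> X = {}" using Zclosed AE_mu_Z by (intro null_open) auto
  then show ?thesis by auto
qed

lemma X_ne: "X \<noteq> {}" using intne interior_of_subset[of "top_of_set Z" X] by blast

lemma fmin: "\<exists>c0>0. \<forall>y\<in>X. c0 \<le> f y"
proof -
  obtain y0 where "y0 \<in> X" "\<forall>y\<in>X. f y0 \<le> f y" using continuous_attains_inf[OF Xc X_ne fc] by blast
  then show ?thesis using fpos by blast
qed

lemma Vd_elem: "p \<in> Vd d Z \<longleftrightarrow> (\<exists>q. poly_deg d q \<and> p = (\<lambda>y. if y \<in> Z then q y else 0))"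
  unfolding Vd_def mem_Collect_eq by (rule ex_cong1) (rule conj_commute)

lemma Vd_meas: assumes "p \<in> Vd d Z" shows "p \<in> borel_measurable mu"
proof -
  obtain q where q: "poly_deg d q" "p = (\<lambda>y. if y \<in> Z then q y else 0)" using assms by (auto simp: Vd_elem)
  have "(\<lambda>y. indicator Z y *\<^sub>R q y) \<in> borel_measurable borel"
    using Zclosed poly_deg_continuous[OF q(1)] by (intro borel_measurable_continuous_on_indicator) auto
  moreover have "p = (\<lambda>y. indicator Z y *\<^sub>R q y)" using q(2) by (auto simp: indicator_def)
  ultimately show ?thesis by (simp add: measurable_cong_sets[OF sets_mu refl])
qed

lemma cont_sqi_mu: "continuous_on UNIV q \<Longrightarrow> sqi mu q"
  by (rule sqi_cont[OF sets_mu finmu Xc AE_mu_X])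

lemma Vd_sqi: assumes "p \<in> Vd d Z" shows "sqi mu p"
proof -
  obtain q where q: "poly_deg d q" "p = (\<lambda>y. if y \<in> Z then q y else 0)" using assms by (auto simp: Vd_elem)
  have "AE y in mu. p y = q y" using AE_mu_Z by eventually_elim (simp add: q(2))
  then show ?thesis using sqi_AE_cong[OF cont_sqi_mu[OF poly_deg_continuous[OF q(1)]] Vd_meas[OF assms]] by simp
qed

lemma Vd_diff: assumes "p \<in> Vd d Z" "p' \<in> Vd d Z" shows "(\<lambda>y. p y - p' y) \<in> Vd d Z"
proof -
  obtain q where q: "poly_deg d q" "p = (\<lambda>y. if y \<in> Z then q y else 0)" using assms by (auto simp: Vd_elem)
  obtain q' where q': "poly_deg d q'" "p' = (\<lambda>y. if y \<in> Z then q' y else 0)" using assms by (auto simp: Vd_elem)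
  have pd: "poly_deg d (\<lambda>y. q y + (-1) * q' y)" using q(1) q'(1) by (intro poly_deg_add poly_deg_cmult)
  show ?thesis unfolding Vd_elem
  proof (intro exI[of _ "\<lambda>y. q y + (-1) * q' y"] conjI)
    show "(\<lambda>y. p y - p' y) = (\<lambda>y. if y \<in> Z then q y + (-1) * q' y else 0)" unfolding q(2) q'(2) by (rule ext) simp
  qed (rule pd)
qed

lemma Vd_mono: "Vd d Z \<subseteq> Vd (Suc d) Z"
proof
  fix p assume "p \<in> Vd d Z"
  then obtain q where q: "poly_deg d q" "p = (\<lambda>y. if y \<in> Z then q y else 0)" by (auto simp: Vd_elem)
  have "poly_deg (Suc d) q" using q(1) by (rule poly_deg_mono_deg) auto
  then show "p \<in> Vd (Suc d) Z" using q(2) unfolding Vd_elem by (intro exI[of _ q]) simp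
qed

lemma Vd_null: assumes "p \<in> Vd d Z" "AE y in mu. p y = 0" shows "p = (\<lambda>_. 0)"
proof -
  obtain q where q: "poly_deg d q" "p = (\<lambda>y. if y \<in> Z then q y else 0)" using assms by (auto simp: Vd_elem)
  have qc: "continuous_on UNIV q" using poly_deg_continuous[OF q(1)] .
  have "open {y. q y \<noteq> 0}" using qc by (intro open_Collect_neq continuous_on_const) auto
  moreover have "AE y in mu. y \<notin> {y. q y \<noteq> 0}" using assms(2) AE_mu_Z by eventually_elim (auto simp: q(2))
  ultimately have "{y. q y \<noteq> 0} \<inter> X = {}" by (rule null_open)
  then have "\<forall>y\<in>X. q y = 0" by auto
  moreover have "polynomial_fun q" using q(1) by (auto simp: polynomial_fun_def)
  ultimately have qZ: "\<forall>y\<in>Z. q y = 0" using zd unfolding zariski_dense_def by blast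
  show ?thesis unfolding q(2) by (rule ext) (simp add: qZ)
qed

definition bZ :: "('n \<Rightarrow> nat) \<Rightarrow> real^'n \<Rightarrow> real" where
  "bZ \<alpha> y = (if y \<in> Z then mon \<alpha> y else 0)"

lemma bZ_Vd: "\<alpha> \<in> Aset d \<Longrightarrow> bZ \<alpha> \<in> Vd d Z"
  unfolding Vd_elem bZ_def by (intro exI[of _ "mon \<alpha>"]) (auto intro: poly_deg_mon simp: Aset_def)

lemma bZ_sum: "(\<Sum>\<alpha>\<in>A. c \<alpha> * bZ \<alpha> y) = (if y \<in> Z then (\<Sum>\<alpha>\<in>A. c \<alpha> * mon \<alpha> y) else 0)"
  by (cases "y \<in> Z") (simp_all add: bZ_def)

lemma Vd_repr: assumes "p \<in> Vd d Z" shows "\<exists>c. p = (\<lambda>y. \<Sum>\<alpha>\<in>Aset d. c \<alpha> * bZ \<alpha> y)"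
proof -
  obtain q where q: "poly_deg d q" "p = (\<lambda>y. if y \<in> Z then q y else 0)" using assms by (auto simp: Vd_elem)
  obtain c where c: "q = (\<lambda>x. \<Sum>\<alpha>\<in>Aset d. c \<alpha> * mon \<alpha> x)" using q(1) by (auto simp: poly_deg_iff)
  have "p = (\<lambda>y. \<Sum>\<alpha>\<in>Aset d. c \<alpha> * bZ \<alpha> y)"
  proof (rule ext)
    fix y show "p y = (\<Sum>\<alpha>\<in>Aset d. c \<alpha> * bZ \<alpha> y)" unfolding bZ_sum q(2) c by simp
  qed
  then show ?thesis by (rule exI[where x=c])
qed

lemma lincomb_Vd: "(\<lambda>y. \<Sum>\<alpha>\<in>Aset d. c \<alpha> * bZ \<alpha> y) \<in> Vd d Z"
proof -
  have e: "(\<lambda>y. \<Sum>\<alpha>\<in>Aset d. c \<alpha> * bZ \<alpha> y) = (\<lambda>y. if y \<in> Z then (\<Sum>\<alpha>\<in>Aset d. c \<alpha> * mon \<alpha> y) else 0)"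
    unfolding bZ_sum ..
  have pd: "poly_deg d (\<lambda>y. \<Sum>\<alpha>\<in>Aset d. c \<alpha> * mon \<alpha> y)" unfolding poly_deg_iff by (rule exI[of _ c]) (rule refl)
  show ?thesis unfolding e Vd_elem by (rule exI[of _ "\<lambda>y. \<Sum>\<alpha>\<in>Aset d. c \<alpha> * mon \<alpha> y"]) (simp add: pd)
qed

lemma proj_Vd: assumes h: "sqi mu h" shows "\<exists>g\<in>Vd d Z. \<forall>p\<in>Vd d Z. ip mu (\<lambda>y. h y - g y) p = 0"
proof -
  have bs: "\<And>\<alpha>. \<alpha> \<in> Aset d \<Longrightarrow> sqi mu (bZ \<alpha>)" by (rule Vd_sqi[OF bZ_Vd])
  have ex: "\<exists>c. \<forall>\<beta>\<in>Aset d. ip mu (\<lambda>y. h y - (\<Sum>\<alpha>\<in>Aset d. c \<alpha> * bZ \<alpha> y)) (bZ \<beta>) = 0"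
    by (rule proj_exists[where I="Aset d" and b=bZ]) (auto intro: finite_Aset bs h)
  then obtain c where c: "\<forall>\<beta>\<in>Aset d. ip mu (\<lambda>y. h y - (\<Sum>\<alpha>\<in>Aset d. c \<alpha> * bZ \<alpha> y)) (bZ \<beta>) = 0"
    by blast
  define g where "g = (\<lambda>y. \<Sum>\<alpha>\<in>Aset d. c \<alpha> * bZ \<alpha> y)"
  have gV: "g \<in> Vd d Z" unfolding g_def by (rule lincomb_Vd)
  have hg: "sqi mu (\<lambda>y. h y - g y)" using sqi_diff[OF h Vd_sqi[OF gV]] .
  have orth: "ip mu (\<lambda>y. h y - g y) p = 0" if pV: "p \<in> Vd d Z" for p
  proof -
    obtain c' where c': "p = (\<lambda>y. \<Sum>\<alpha>\<in>Aset d. c' \<alpha> * bZ \<alpha> y)" using Vd_repr[OF pV] by blast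
    have "ip mu (\<lambda>y. h y - g y) p = ip mu p (\<lambda>y. h y - g y)" by (rule ip_sym)
    also have "\<dots> = (\<Sum>\<alpha>\<in>Aset d. c' \<alpha> * ip mu (bZ \<alpha>) (\<lambda>y. h y - g y))"
      unfolding c' by (rule ip_lincomb_left[OF finite_Aset bs hg])
    also have "\<dots> = 0"
    proof -
      have "ip mu (bZ \<alpha>) (\<lambda>y. h y - g y) = 0" if "\<alpha> \<in> Aset d" for \<alpha>
        using c that ip_sym[of mu "bZ \<alpha>" "\<lambda>y. h y - g y"] by (simp add: g_def)
      then show ?thesis by (intro sum.neutral) simp
    qed
    finally show ?thesis .
  qed
  show ?thesis
  proof (rule bexI[of _ g])
    show "\<forall>p\<in>Vd d Z. ip mu (\<lambda>y. h y - g y) p = 0" using orth by (rule ballI)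
  qed (rule gV)
qed

lemma proj_unique:
  assumes h: "sqi mu h" and g1: "g1 \<in> Vd d Z" "\<forall>p\<in>Vd d Z. ip mu (\<lambda>y. h y - g1 y) p = 0"
    and g2: "g2 \<in> Vd d Z" "\<forall>p\<in>Vd d Z. ip mu (\<lambda>y. h y - g2 y) p = 0"
  shows "g1 = g2"
proof -
  define w where "w = (\<lambda>y. g1 y - g2 y)"
  have wV: "w \<in> Vd d Z" unfolding w_def using Vd_diff[OF g1(1) g2(1)] .
  have s1: "sqi mu (\<lambda>y. h y - g1 y)" using sqi_diff[OF h Vd_sqi[OF g1(1)]] .
  have s2: "sqi mu (\<lambda>y. h y - g2 y)" using sqi_diff[OF h Vd_sqi[OF g2(1)]] .
  have e: "(\<lambda>y. (h y - g2 y) - (h y - g1 y)) = w" by (auto simp: w_def)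
  have "ip mu w w = ip mu (\<lambda>y. h y - g2 y) w - ip mu (\<lambda>y. h y - g1 y) w"
    using ip_diff_left[OF s2 s1 Vd_sqi[OF wV]] unfolding e .
  also have "\<dots> = 0" using g1(2) g2(2) wV by simp
  finally have "AE y in mu. w y = 0" by (rule ip_self_zero[OF Vd_sqi[OF wV]])
  then have w0: "w = (\<lambda>_. 0)" using Vd_null[OF wV] by simp
  have "g1 y = g2 y" for y using fun_cong[OF w0, of y] by (simp add: w_def)
  then show ?thesis by (rule ext)
qed

end

context dsetup begin

lemmas moll_i = moll[unfolded L2_mollifiers_def, THEN conjunct2, THEN conjunct2, THEN conjunct1]
lemmas moll_ii = moll[unfolded L2_mollifiers_def, THEN conjunct2, THEN conjunct2, THEN conjunct2, THEN conjunct1]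
lemmas moll_iv = moll[unfolded L2_mollifiers_def, THEN conjunct2, THEN conjunct2, THEN conjunct2, THEN conjunct2, THEN conjunct2]

lemma phi_props: assumes "z \<in> Z" "\<epsilon> \<in> E"
  shows "\<phi> z \<epsilon> \<in> borel_measurable lam" "integrable lam (\<lambda>y. (\<phi> z \<epsilon> y)^2)" "L2norm lam (\<phi> z \<epsilon>) > 0"
proof -
  show "\<phi> z \<epsilon> \<in> borel_measurable lam" "integrable lam (\<lambda>y. (\<phi> z \<epsilon> y)^2)"
    using moll_i assms by auto
  obtain c C where "0 < c" "c < L2norm lam (\<phi> z \<epsilon>)" using moll_ii assms by blast
  then show "L2norm lam (\<phi> z \<epsilon>) > 0" by linarith
qed

lemma L2norm_sq: assumes "z \<in> Z" "\<epsilon> \<in> E"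
  shows "(L2norm lam (\<phi> z \<epsilon>))^2 = (\<integral>y. (\<phi> z \<epsilon> y)^2 \<partial>lam)"
  unfolding L2norm_def by (rule real_sqrt_pow2) (auto intro: integral_nonneg_AE)

lemma meas_lam_mu: "g \<in> borel_measurable mu \<longleftrightarrow> g \<in> borel_measurable lam"
  by (simp add: measurable_cong_sets[OF sets_mu refl] measurable_cong_sets[OF slam refl])

lemma invF_bound: "\<exists>c0>0. \<forall>y. 0 \<le> inverse (F y) \<and> inverse (F y) \<le> 1 / c0"
proof -
  obtain c0 where c0: "c0 > 0" "\<forall>y\<in>X. c0 \<le> f y" using fmin by blast
  have "0 \<le> inverse (F y) \<and> inverse (F y) \<le> 1 / c0" for y
  proof (cases "y \<in> X")
    case True
    then have "F y = f y" "c0 \<le> f y" using c0 by (auto simp: Fdef)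
    then show ?thesis using c0 by (simp add: inverse_eq_divide frac_le)
  next
    case False then show ?thesis using c0 by (simp add: Fdef)
  qed
  then show ?thesis using c0 by blast
qed

lemma invFm: "(\<lambda>y. inverse (F y)) \<in> borel_measurable lam"
  using Fm by measurable

lemma integral_mu: "u \<in> borel_measurable lam \<Longrightarrow> (\<integral>y. u y \<partial>mu) = (\<integral>y. F y * u y \<partial>lam)"
  unfolding mu_eq by (subst integral_density) (use Fm F_nonneg in auto)

lemma integrable_mu: "u \<in> borel_measurable lam \<Longrightarrow> integrable mu u \<longleftrightarrow> integrable lam (\<lambda>y. F y * u y)"
  unfolding mu_eq by (subst integrable_density) (use Fm F_nonneg in auto)

lemma F_invF: "F y * (inverse (F y) * inverse (F y)) = inverse (F y)"
  by (cases "F y = 0") (simp_all add: field_simps)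

lemma h_sqi: assumes pm: "ph \<in> borel_measurable lam" and pi: "integrable lam (\<lambda>y. (ph y)^2)"
  shows "sqi mu (\<lambda>y. ph y * inverse (F y))"
proof -
  obtain c0 where c0: "c0 > 0" "\<And>y. 0 \<le> inverse (F y) \<and> inverse (F y) \<le> 1 / c0" using invF_bound by blast
  have hm: "(\<lambda>y. ph y * inverse (F y)) \<in> borel_measurable lam" using pm invFm by measurable
  have eq: "F y * (ph y * inverse (F y))^2 = (ph y)^2 * inverse (F y)" for y
    using F_invF[of y] by (simp add: power2_eq_square algebra_simps)
  have "integrable lam (\<lambda>y. (ph y)^2 * inverse (F y))"
  proof (rule Bochner_Integration.integrable_bound[where f="\<lambda>y. (1 / c0) * (ph y)^2"])
    show "integrable lam (\<lambda>y. (1 / c0) * (ph y)^2)" using pi by simp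
    show "(\<lambda>y. (ph y)^2 * inverse (F y)) \<in> borel_measurable lam" using pm invFm by measurable
    show "AE y in lam. norm ((ph y)^2 * inverse (F y)) \<le> norm ((1 / c0) * (ph y)^2)"
    proof (intro AE_I2)
      fix y
      have "(ph y)^2 * inverse (F y) \<le> (ph y)^2 * (1 / c0)" using c0(2)[of y] by (intro mult_left_mono) auto
      then show "norm ((ph y)^2 * inverse (F y)) \<le> norm ((1 / c0) * (ph y)^2)"
        using c0 by (simp add: abs_of_nonneg mult.commute)
    qed
  qed
  then have "integrable mu (\<lambda>y. (ph y * inverse (F y))^2)"
    using hm by (subst integrable_mu) (auto simp: eq)
  then show ?thesis using hm by (simp add: sqi_def meas_lam_mu)
qed

lemma ip_hh: assumes pm: "ph \<in> borel_measurable lam"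
  shows "ip mu (\<lambda>y. ph y * inverse (F y)) (\<lambda>y. ph y * inverse (F y)) = (\<integral>y. (ph y)^2 * inverse (F y) \<partial>lam)"
proof -
  have "ip mu (\<lambda>y. ph y * inverse (F y)) (\<lambda>y. ph y * inverse (F y)) = (\<integral>y. F y * ((ph y * inverse (F y)) * (ph y * inverse (F y))) \<partial>lam)"
    unfolding ip_def using pm invFm by (intro integral_mu borel_measurable_times)
  also have "\<dots> = (\<integral>y. (ph y)^2 * inverse (F y) \<partial>lam)"
  proof (rule Bochner_Integration.integral_cong[OF refl])
    fix y show "F y * ((ph y * inverse (F y)) * (ph y * inverse (F y))) = (ph y)^2 * inverse (F y)"
      using F_invF[of y] by (simp add: power2_eq_square algebra_simps)
  qed
  finally show ?thesis .
qed

lemma interface_lam: assumes pm: "ph \<in> borel_measurable lam" and p: "p \<in> borel_measurable lam"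
  shows "(LINT y:X|lam. ph y * p y) = ip mu (\<lambda>y. ph y * inverse (F y)) p"
proof -
  have "ip mu (\<lambda>y. ph y * inverse (F y)) p = (\<integral>y. F y * (ph y * inverse (F y) * p y) \<partial>lam)"
    unfolding ip_def using pm invFm p by (intro integral_mu borel_measurable_times)
  also have "\<dots> = (LINT y:X|lam. ph y * p y)"
    unfolding set_lebesgue_integral_def
  proof (rule Bochner_Integration.integral_cong[OF refl])
    fix y show "F y * (ph y * inverse (F y) * p y) = indicator X y *\<^sub>R (ph y * p y)"
      using fpos by (cases "y \<in> X") (auto simp: Fdef)
  qed
  finally show ?thesis by simp
qed

lemma Xsets: "X \<in> sets mu" using Xclosed sets_mu by simp

lemma interface_mu: assumes g: "g \<in> borel_measurable mu" and p: "p \<in> borel_measurable mu"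
  shows "(LINT y:X|mu. g y * p y) = ip mu g p"
  unfolding set_lebesgue_integral_def ip_def
  using g p AE_mu_X Xsets by (intro integral_cong_AE borel_measurable_times borel_measurable_indicator) auto

lemma cont_meas_mu: "continuous_on UNIV q \<Longrightarrow> q \<in> borel_measurable mu"
  using borel_measurable_continuous_onI by (simp add: measurable_cong_sets[OF sets_mu refl])

lemma per_eps: assumes xZ: "x \<in> Z" and eE: "\<epsilon> \<in> E"
  shows "(\<lambda>d. DMCD Z X lam mu \<phi> d \<epsilon> x x) \<longlonglongrightarrow> (\<integral>y. (\<phi> x \<epsilon> y)^2 * inverse (F y) \<partial>lam)"
proof -
  define ph where "ph = \<phi> x \<epsilon>"
  have pm: "ph \<in> borel_measurable lam" and pi: "integrable lam (\<lambda>y. (ph y)^2)"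
    using phi_props[OF xZ eE] by (auto simp: ph_def)
  define h where "h = (\<lambda>y. ph y * inverse (F y))"
  have hs: "sqi mu h" unfolding h_def by (rule h_sqi[OF pm pi])
  have hm: "h \<in> borel_measurable mu" using hs by (simp add: sqi_def)
  have ex: "\<forall>d. \<exists>g. g \<in> Vd d Z \<and> (\<forall>p\<in>Vd d Z. ip mu (\<lambda>y. h y - g y) p = 0)"
  proof
    fix d from proj_Vd[OF hs, of d] obtain g where "g \<in> Vd d Z" "\<forall>p\<in>Vd d Z. ip mu (\<lambda>y. h y - g y) p = 0" ..
    then show "\<exists>g. g \<in> Vd d Z \<and> (\<forall>p\<in>Vd d Z. ip mu (\<lambda>y. h y - g y) p = 0)" by (intro exI[of _ g] conjI)
  qed
  from choice[OF ex] obtain G where G: "\<forall>d. G d \<in> Vd d Z \<and> (\<forall>p\<in>Vd d Z. ip mu (\<lambda>y. h y - G d y) p = 0)" ..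
  have GV: "G d \<in> Vd d Z" for d using G by blast
  have Gorth: "ip mu (\<lambda>y. h y - G d y) p = 0" if "p \<in> Vd d Z" for d p using G that by blast
  have Gs: "sqi mu (G d)" for d using Vd_sqi[OF GV] .
  have key: "(\<forall>p\<in>Vd d Z. (LINT y:X|lam. \<phi> x \<epsilon> y * p y) = (LINT y:X|mu. g y * p y)) \<longleftrightarrow>
       (\<forall>p\<in>Vd d Z. ip mu (\<lambda>y. h y - g y) p = 0)" if gV: "g \<in> Vd d Z" for g d
  proof -
    have "(LINT y:X|lam. \<phi> x \<epsilon> y * p y) = (LINT y:X|mu. g y * p y) \<longleftrightarrow> ip mu (\<lambda>y. h y - g y) p = 0"
      if pV: "p \<in> Vd d Z" for p
    proof -
      have pm': "p \<in> borel_measurable lam" using Vd_meas[OF pV] by (simp add: meas_lam_mu)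
      have "(LINT y:X|lam. \<phi> x \<epsilon> y * p y) = ip mu h p"
        unfolding h_def using interface_lam[OF pm pm'] by (simp add: ph_def)
      moreover have "(LINT y:X|mu. g y * p y) = ip mu g p"
        by (rule interface_mu[OF Vd_meas[OF gV] Vd_meas[OF pV]])
      moreover have "ip mu (\<lambda>y. h y - g y) p = ip mu h p - ip mu g p"
        by (rule ip_diff_left[OF hs Vd_sqi[OF gV] Vd_sqi[OF pV]])
      ultimately show ?thesis by simp
    qed
    then show ?thesis by blast
  qed
  have drep: "dens_rep Z X lam mu \<phi> d \<epsilon> x = G d" for d
    unfolding dens_rep_def
  proof (rule the_equality)
    show "G d \<in> Vd d Z \<and> (\<forall>p\<in>Vd d Z. (LINT y:X|lam. \<phi> x \<epsilon> y * p y) = (LINT y:X|mu. G d y * p y))"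
      using key[OF GV] GV G by blast
    fix g assume "g \<in> Vd d Z \<and> (\<forall>p\<in>Vd d Z. (LINT y:X|lam. \<phi> x \<epsilon> y * p y) = (LINT y:X|mu. g y * p y))"
    then have gV: "g \<in> Vd d Z" and go: "\<forall>p\<in>Vd d Z. ip mu (\<lambda>y. h y - g y) p = 0" using key by blast+
    show "g = G d" by (rule proj_unique[OF hs gV go GV]) (use G in blast)
  qed
  have dm: "DMCD Z X lam mu \<phi> d \<epsilon> x x = ip mu (G d) (G d)" for d
    unfolding DMCD_def drep ip_def ..
  have approx: "\<exists>d q. q \<in> Vd d Z \<and> ip mu (\<lambda>y. h y - q y) (\<lambda>y. h y - q y) < \<eta>" if \<eta>pos: "\<eta> > 0" for \<eta>
  proof -
    obtain q0 where q0: "polynomial_fun q0" "ip mu (\<lambda>y. h y - q0 y) (\<lambda>y. h y - q0 y) < \<eta>"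
      using poly_approx_L2[OF sets_mu finmu Xc AE_mu_X hs \<eta>pos] by blast
    obtain D where D: "poly_deg D q0" using q0(1) by (auto simp: polynomial_fun_def)
    define q where "q = (\<lambda>y. if y \<in> Z then q0 y else 0)"
    have qV: "q \<in> Vd D Z" unfolding Vd_elem q_def by (rule exI[of _ q0]) (simp add: D)
    have q0m: "q0 \<in> borel_measurable mu" using cont_meas_mu[OF polynomial_fun_continuous[OF q0(1)]] .
    have "ip mu (\<lambda>y. h y - q y) (\<lambda>y. h y - q y) = ip mu (\<lambda>y. h y - q0 y) (\<lambda>y. h y - q0 y)"
    proof (rule ip_AE_cong)
      show "AE y in mu. h y - q y = h y - q0 y" using AE_mu_Z by eventually_elim (simp add: q_def)
      then show "AE y in mu. h y - q y = h y - q0 y" .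
    qed (use hm q0m Vd_meas[OF qV] in auto)
    then have "ip mu (\<lambda>y. h y - q y) (\<lambda>y. h y - q y) < \<eta>" using q0(2) by simp
    then show ?thesis using qV by (intro exI[of _ D] exI[of _ q] conjI)
  qed
  have "(\<lambda>d. ip mu (G d) (G d)) \<longlonglongrightarrow> ip mu h h"
    by (rule proj_facts(6)[where W="\<lambda>d. Vd d Z" and M=mu and h=h and g=G])
       (use Vd_sqi Vd_diff Vd_mono hs GV Gorth approx in auto)
  moreover have "ip mu h h = (\<integral>y. (\<phi> x \<epsilon> y)^2 * inverse (F y) \<partial>lam)"
    unfolding h_def using ip_hh[OF pm] by (simp add: ph_def)
  ultimately show ?thesis unfolding dm by simp
qed

end

context dsetup begin

lemma int_phi_invF: assumes pm: "ph \<in> borel_measurable lam" and pi: "integrable lam (\<lambda>y. (ph y)^2)"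
  shows "integrable lam (\<lambda>y. (ph y)^2 * inverse (F y))"
proof -
  obtain c0 where c0: "c0 > 0" "\<And>y. 0 \<le> inverse (F y) \<and> inverse (F y) \<le> 1 / c0" using invF_bound by blast
  show ?thesis
  proof (rule Bochner_Integration.integrable_bound[where f="\<lambda>y. (1 / c0) * (ph y)^2"])
    show "integrable lam (\<lambda>y. (1 / c0) * (ph y)^2)" using pi by simp
    show "(\<lambda>y. (ph y)^2 * inverse (F y)) \<in> borel_measurable lam" using pm invFm by measurable
    show "AE y in lam. norm ((ph y)^2 * inverse (F y)) \<le> norm ((1 / c0) * (ph y)^2)"
    proof (intro AE_I2)
      fix y
      have "(ph y)^2 * inverse (F y) \<le> (ph y)^2 * (1 / c0)" using c0(2)[of y] by (intro mult_left_mono) auto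
      then show "norm ((ph y)^2 * inverse (F y)) \<le> norm ((1 / c0) * (ph y)^2)"
        using c0 by (simp add: abs_of_nonneg mult.commute)
    qed
  qed
qed

lemma ev_within: "(\<And>\<epsilon>. \<epsilon> \<in> E \<Longrightarrow> P \<epsilon>) \<Longrightarrow> eventually P (at 0 within E)"
  unfolding eventually_at_filter by (intro always_eventually) auto

lemma far_sets: "{y. \<delta> < norm (y - x)} \<in> sets lam"
proof -
  have "open {y. \<delta> < norm (y - x)}" by (intro open_Collect_less continuous_intros)
  then show ?thesis using slam by simp
qed

lemma int_far: fixes ph :: "real^'n \<Rightarrow> real" assumes pi: "integrable lam (\<lambda>y. (ph y)^2)"
  shows "integrable lam (\<lambda>y. indicator {y. \<delta> < norm (y - x)} y * (ph y)^2)"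
proof -
  have "integrable lam (\<lambda>y. indicator {y. \<delta> < norm (y - x)} y *\<^sub>R (ph y)^2)"
    using Bochner_Integration.integrable_mult_indicator[OF far_sets pi] .
  then show ?thesis by simp
qed

lemma lim_out: assumes xZ: "x \<in> Z" and xX: "x \<notin> X"
  shows "((\<lambda>\<epsilon>. (\<integral>y. (\<phi> x \<epsilon> y)^2 * inverse (F y) \<partial>lam) / (L2norm lam (\<phi> x \<epsilon>))^2) \<longlongrightarrow> 0) (at 0 within E)"
proof -
  obtain c0 where c0: "c0 > 0" "\<And>y. 0 \<le> inverse (F y) \<and> inverse (F y) \<le> 1 / c0" using invF_bound by blast
  obtain \<delta> where \<delta>: "\<delta> > 0" "ball x \<delta> \<subseteq> - X" using Xclosed xX open_contains_ball[of "- X"] by auto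
  have farX: "\<delta> / 2 < norm (y - x)" if "y \<in> X" for y
  proof -
    have "y \<notin> ball x \<delta>" using \<delta>(2) that by auto
    then have "\<delta> \<le> norm (y - x)" by (simp add: dist_norm norm_minus_commute)
    then show ?thesis using \<delta>(1) by linarith
  qed
  define T where "T \<epsilon> = (LINT y:{y. \<delta> / 2 < norm (y - x)}|lam. (\<phi> x \<epsilon> y)^2) / (L2norm lam (\<phi> x \<epsilon>))^2" for \<epsilon>
  have T0: "(T \<longlongrightarrow> 0) (at 0 within E)"
    unfolding T_def by (rule moll_iv[rule_format]) (use \<delta>(1) xZ in auto)
  have bounds: "0 \<le> (\<integral>y. (\<phi> x \<epsilon> y)^2 * inverse (F y) \<partial>lam) / (L2norm lam (\<phi> x \<epsilon>))^2 \<and>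
      (\<integral>y. (\<phi> x \<epsilon> y)^2 * inverse (F y) \<partial>lam) / (L2norm lam (\<phi> x \<epsilon>))^2 \<le> (1 / c0) * T \<epsilon>" if eE: "\<epsilon> \<in> E" for \<epsilon>
  proof -
    have pm: "\<phi> x \<epsilon> \<in> borel_measurable lam" and pi: "integrable lam (\<lambda>y. (\<phi> x \<epsilon> y)^2)"
      and Np: "L2norm lam (\<phi> x \<epsilon>) > 0" using phi_props[OF xZ eE] by auto
    have I0: "0 \<le> (\<integral>y. (\<phi> x \<epsilon> y)^2 * inverse (F y) \<partial>lam)"
      using c0(2) by (intro integral_nonneg_AE AE_I2) simp
    have "(\<integral>y. (\<phi> x \<epsilon> y)^2 * inverse (F y) \<partial>lam) \<le> (\<integral>y. (1 / c0) * (indicator {y. \<delta> / 2 < norm (y - x)} y * (\<phi> x \<epsilon> y)^2) \<partial>lam)"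
    proof (rule integral_mono)
      show "integrable lam (\<lambda>y. (\<phi> x \<epsilon> y)^2 * inverse (F y))" by (rule int_phi_invF[OF pm pi])
      show "integrable lam (\<lambda>y. (1 / c0) * (indicator {y. \<delta> / 2 < norm (y - x)} y * (\<phi> x \<epsilon> y)^2))"
        using int_far[where \<delta>="\<delta> / 2" and x=x, OF pi] by simp
      fix y
      show "(\<phi> x \<epsilon> y)^2 * inverse (F y) \<le> (1 / c0) * (indicator {y. \<delta> / 2 < norm (y - x)} y * (\<phi> x \<epsilon> y)^2)"
      proof (cases "y \<in> X")
        case True
        then have "(\<phi> x \<epsilon> y)^2 * inverse (F y) \<le> (\<phi> x \<epsilon> y)^2 * (1 / c0)" using c0(2)[of y] by (intro mult_left_mono) auto
        then show ?thesis using farX[OF True] by (simp add: mult.commute)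
      next
        case False then show ?thesis using c0 by (simp add: Fdef)
      qed
    qed
    also have "\<dots> = (1 / c0) * (LINT y:{y. \<delta> / 2 < norm (y - x)}|lam. (\<phi> x \<epsilon> y)^2)"
      by (simp add: set_lebesgue_integral_def)
    finally have "(\<integral>y. (\<phi> x \<epsilon> y)^2 * inverse (F y) \<partial>lam) / (L2norm lam (\<phi> x \<epsilon>))^2 \<le>
        ((1 / c0) * (LINT y:{y. \<delta> / 2 < norm (y - x)}|lam. (\<phi> x \<epsilon> y)^2)) / (L2norm lam (\<phi> x \<epsilon>))^2"
      using Np by (intro divide_right_mono) auto
    also have "\<dots> = (1 / c0) * T \<epsilon>" by (simp add: T_def)
    finally have "(\<integral>y. (\<phi> x \<epsilon> y)^2 * inverse (F y) \<partial>lam) / (L2norm lam (\<phi> x \<epsilon>))^2 \<le> (1 / c0) * T \<epsilon>" .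
    then show ?thesis using I0 Np by simp
  qed
  have "((\<lambda>\<epsilon>. (1 / c0) * T \<epsilon>) \<longlongrightarrow> (1 / c0) * 0) (at 0 within E)" by (intro tendsto_intros T0)
  then have up: "((\<lambda>\<epsilon>. (1 / c0) * T \<epsilon>) \<longlongrightarrow> 0) (at 0 within E)" by simp
  show ?thesis
    by (rule tendsto_sandwich[OF ev_within ev_within tendsto_const up]) (use bounds in auto)
qed

lemma lim_in: assumes xZ: "x \<in> Z" and xi: "x \<in> (top_of_set Z) interior_of X"
  shows "((\<lambda>\<epsilon>. (\<integral>y. (\<phi> x \<epsilon> y)^2 * inverse (F y) \<partial>lam) / (L2norm lam (\<phi> x \<epsilon>))^2) \<longlongrightarrow> 1 / f x) (at 0 within E)"
proof -
  obtain c0 where c0: "c0 > 0" "\<And>y. 0 \<le> inverse (F y) \<and> inverse (F y) \<le> 1 / c0" using invF_bound by blast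
  from xi obtain T' where T': "openin (top_of_set Z) T'" "x \<in> T'" "T' \<subseteq> X" by (auto simp: interior_of_def)
  then obtain T where T: "open T" "T' = Z \<inter> T" by (auto simp: openin_open)
  obtain \<delta>0 where \<delta>0: "\<delta>0 > 0" "ball x \<delta>0 \<subseteq> T" using T T'(2) open_contains_ball by blast
  have near: "y \<in> X" if "y \<in> Z" "norm (y - x) < \<delta>0" for y
  proof -
    have "y \<in> ball x \<delta>0" using that by (simp add: dist_norm norm_minus_commute)
    then show ?thesis using \<delta>0 T T' that by auto
  qed
  have xX: "x \<in> X" using T' by auto
  have fx: "f x > 0" using fpos xX by auto
  have ic: "continuous_on X (\<lambda>y. inverse (f y))" using fc fpos by (intro continuous_on_inverse) auto
  show ?thesis unfolding tendsto_iff
  proof (intro allI impI)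
    fix e :: real assume e: "e > 0"
    define \<eta> where "\<eta> = e / 2"
    have \<eta>: "\<eta> > 0" using e by (simp add: \<eta>_def)
    obtain \<delta>1 where \<delta>1: "\<delta>1 > 0" "\<And>y. y \<in> X \<Longrightarrow> dist y x < \<delta>1 \<Longrightarrow> dist (inverse (f y)) (inverse (f x)) < \<eta>"
      using ic xX \<eta> unfolding continuous_on_iff by metis
    define \<delta> where "\<delta> = min \<delta>0 \<delta>1"
    have \<delta>: "\<delta> > 0" using \<delta>0 \<delta>1 by (simp add: \<delta>_def)
    define C where "C = 1 / c0 + inverse (f x)"
    have C: "C > 0" using c0 fx by (simp add: C_def add_pos_pos)
    define T where "T \<epsilon> = (LINT y:{y. \<delta> / 2 < norm (y - x)}|lam. (\<phi> x \<epsilon> y)^2) / (L2norm lam (\<phi> x \<epsilon>))^2" for \<epsilon>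
    have T0: "(T \<longlongrightarrow> 0) (at 0 within E)"
      unfolding T_def by (rule moll_iv[rule_format]) (use \<delta> xZ in auto)
    have ev: "eventually (\<lambda>\<epsilon>. dist (T \<epsilon>) 0 < \<eta> / C) (at 0 within E)"
      using T0 \<eta> C unfolding tendsto_iff by (auto intro: divide_pos_pos)
    have evE: "eventually (\<lambda>\<epsilon>. \<epsilon> \<in> E) (at 0 within E)" by (rule ev_within)
    show "eventually (\<lambda>\<epsilon>. dist ((\<integral>y. (\<phi> x \<epsilon> y)^2 * inverse (F y) \<partial>lam) / (L2norm lam (\<phi> x \<epsilon>))^2) (1 / f x) < e) (at 0 within E)"
      using ev evE
    proof eventually_elim
      case (elim \<epsilon>)
      have eE: "\<epsilon> \<in> E" using elim by simp
      define ph where "ph = \<phi> x \<epsilon>"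
      have pm: "ph \<in> borel_measurable lam" and pi: "integrable lam (\<lambda>y. (ph y)^2)"
        and Np: "L2norm lam ph > 0" using phi_props[OF xZ eE] by (auto simp: ph_def)
      define N where "N = (\<integral>y. (ph y)^2 \<partial>lam)"
      have NL: "(L2norm lam ph)^2 = N" unfolding N_def ph_def by (rule L2norm_sq[OF xZ eE])
      have N0: "N > 0" using Np NL by (metis zero_less_power)
      define I where "I = (\<integral>y. (ph y)^2 * inverse (F y) \<partial>lam)"
      define J where "J = (\<integral>y. indicator {y. \<delta> / 2 < norm (y - x)} y * (ph y)^2 \<partial>lam)"
      have TJ: "T \<epsilon> = J / N" unfolding T_def J_def NL[symmetric] ph_def by (simp add: set_lebesgue_integral_def)
      have J0: "0 \<le> J" unfolding J_def by (intro integral_nonneg_AE AE_I2) simp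
      have TC: "C * T \<epsilon> < \<eta>"
      proof -
        have "T \<epsilon> < \<eta> / C" using elim TJ J0 N0 by (simp add: dist_real_def)
        then show ?thesis using C by (simp add: field_simps)
      qed
      have iI: "integrable lam (\<lambda>y. (ph y)^2 * inverse (F y))" by (rule int_phi_invF[OF pm pi])
      have iJ: "integrable lam (\<lambda>y. indicator {y. \<delta> / 2 < norm (y - x)} y * (ph y)^2)"
        by (rule int_far[OF pi])
      define g where "g y = (ph y)^2 * inverse (F y) - (ph y)^2 * (1 / f x)" for y
      have ig: "integrable lam g" unfolding g_def using iI pi by auto
      have intg: "(\<integral>y. g y \<partial>lam) = I - N * (1 / f x)"
        unfolding g_def I_def N_def using iI pi by simp
      have pw: "\<bar>g y\<bar> \<le> \<eta> * (ph y)^2 + C * (indicator {y. \<delta> / 2 < norm (y - x)} y * (ph y)^2)" if yZ: "y \<in> Z" for y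
      proof (cases "norm (y - x) < \<delta>")
        case True
        then have yX: "y \<in> X" using near[OF yZ] by (simp add: \<delta>_def)
        have "dist y x < \<delta>1" using True by (simp add: dist_norm \<delta>_def)
        then have d: "\<bar>inverse (f y) - inverse (f x)\<bar> < \<eta>" using \<delta>1(2)[OF yX] by (simp add: dist_real_def)
        have "F y = f y" using yX by (simp add: Fdef)
        then have "g y = (ph y)^2 * (inverse (f y) - inverse (f x))"
          by (simp add: g_def right_diff_distrib inverse_eq_divide)
        then have "\<bar>g y\<bar> = (ph y)^2 * \<bar>inverse (f y) - inverse (f x)\<bar>"
          by (simp add: abs_mult)
        also have "\<dots> \<le> (ph y)^2 * \<eta>" using d by (intro mult_left_mono) auto
        finally have "\<bar>g y\<bar> \<le> \<eta> * (ph y)^2" by (simp add: mult.commute)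
        moreover have "0 \<le> C * (indicator {y. \<delta> / 2 < norm (y - x)} y * (ph y)^2)"
          using C by (intro mult_nonneg_nonneg) auto
        ultimately show ?thesis by linarith
      next
        case False
        then have ind: "indicator {y. \<delta> / 2 < norm (y - x)} y = (1::real)" using \<delta> by (simp add: indicator_def)
        have a: "0 \<le> inverse (F y)" "inverse (F y) \<le> 1 / c0" using c0(2)[of y] by auto
        have b: "0 < inverse (f x)" "0 < 1 / c0" using fx c0(1) by auto
        have "\<bar>inverse (F y) - inverse (f x)\<bar> \<le> C"
          unfolding C_def abs_le_iff using a b by linarith
        moreover have "g y = (ph y)^2 * (inverse (F y) - inverse (f x))"
          by (simp add: g_def right_diff_distrib inverse_eq_divide)
        then have "\<bar>g y\<bar> = (ph y)^2 * \<bar>inverse (F y) - inverse (f x)\<bar>"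
          by (simp add: abs_mult)
        ultimately have "\<bar>g y\<bar> \<le> (ph y)^2 * C" by (simp add: mult_left_mono)
        then show ?thesis using \<eta> ind by (simp add: mult.commute add_increasing)
      qed
      have "\<bar>I - N * (1 / f x)\<bar> \<le> (\<integral>y. \<bar>g y\<bar> \<partial>lam)" unfolding intg[symmetric] by (rule integral_abs_bound)
      also have "\<dots> \<le> (\<integral>y. \<eta> * (ph y)^2 + C * (indicator {y. \<delta> / 2 < norm (y - x)} y * (ph y)^2) \<partial>lam)"
        using ig iJ pi AE_lam_Z pw by (intro integral_mono_AE) auto
      also have "\<dots> = \<eta> * N + C * J" unfolding N_def J_def using pi iJ by simp
      finally have bnd: "\<bar>I - N * (1 / f x)\<bar> \<le> \<eta> * N + C * J" .
      have "\<bar>I / N - 1 / f x\<bar> = \<bar>I - N * (1 / f x)\<bar> / N" using N0 by (simp add: field_simps)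
      also have "\<dots> \<le> (\<eta> * N + C * J) / N" using bnd N0 by (intro divide_right_mono) auto
      also have "\<dots> = \<eta> + C * T \<epsilon>" using N0 TJ by (simp add: field_simps)
      also have "\<dots> < e" using TC by (simp add: \<eta>_def)
      finally have "\<bar>I / N - 1 / f x\<bar> < e" .
      then show ?case unfolding dist_real_def I_def NL[symmetric] ph_def .
    qed
  qed
qed

end

theorem theorem3p3:
  fixes Z X :: "(real^'n) set" and lam mu :: "(real^'n) measure" and E :: "real set"
    and \<phi> :: "real^'n \<Rightarrow> real \<Rightarrow> real^'n \<Rightarrow> real" and f :: "real^'n \<Rightarrow> real" and x :: "real^'n"
  assumes "real_alg_variety Z"
    and "sets lam = sets borel" and "emeasure lam (UNIV - Z) = 0"
    and "L2_mollifiers Z lam E \<phi>"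
    and "finite_measure mu"
    and "X = msupp mu" and "compact X"
    and "(top_of_set Z) interior_of X \<noteq> {}"
    and "zariski_dense X Z"
    and "continuous_on X f" and "\<forall>y\<in>X. f y > 0"
    and "mu = density lam (\<lambda>y. ennreal (f y) * indicator X y)"
    and "x \<in> Z" and "x \<in> (top_of_set Z) interior_of X \<or> x \<notin> X"
  shows "\<exists>L. (\<forall>\<epsilon>\<in>E. (\<lambda>d. DMCD Z X lam mu \<phi> d \<epsilon> x x / (L2norm lam (\<phi> x \<epsilon>))^2) \<longlonglongrightarrow> L \<epsilon>) \<and>
             (L \<longlongrightarrow> (if x \<in> (top_of_set Z) interior_of X then 1 / f x else 0)) (at 0 within E)"
proof -
  interpret D: dsetup Z X lam mu E \<phi> f "\<lambda>y. indicator X y * f y"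
    by (rule dsetup.intro[OF assms(1-12) refl])
  define L where "L \<epsilon> = (\<integral>y. (\<phi> x \<epsilon> y)^2 * inverse (indicator X y * f y) \<partial>lam) / (L2norm lam (\<phi> x \<epsilon>))^2" for \<epsilon>
  have A: "(\<lambda>d. DMCD Z X lam mu \<phi> d \<epsilon> x x / (L2norm lam (\<phi> x \<epsilon>))^2) \<longlonglongrightarrow> L \<epsilon>" if eE: "\<epsilon> \<in> E" for \<epsilon>
  proof -
    have "L2norm lam (\<phi> x \<epsilon>) > 0" using D.phi_props[OF assms(13) eE] by auto
    then have nz: "(L2norm lam (\<phi> x \<epsilon>))^2 \<noteq> 0" by simp
    show ?thesis unfolding L_def
      by (rule tendsto_divide[OF D.per_eps[OF assms(13) eE] tendsto_const nz])
  qed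
  have B: "(L \<longlongrightarrow> (if x \<in> (top_of_set Z) interior_of X then 1 / f x else 0)) (at 0 within E)"
  proof (cases "x \<in> (top_of_set Z) interior_of X")
    case True
    then show ?thesis unfolding L_def using D.lim_in[OF assms(13) True] by simp
  next
    case False
    then have "x \<notin> X" using assms(14) by blast
    then show ?thesis unfolding L_def using D.lim_out[OF assms(13)] False by simp
  qed
  show ?thesis using A B by blast
qed

end
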